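(* Let $(S,\mathcal{S})$ be a measurable space with $\Delta\in\mathcal{S}\otimes\mathcal{S}$ and let $\mathcal{R}\subseteq \mathcal{S}$ be a ring with $\sigma(\mathcal{R})=\mathcal{S}$. Let $\mu:\mathcal{S}\to [0,\infty]$ be a measure which is $\sigma$-finite on $\mathcal{R}$ (i.e. there exist $R_n\in\mathcal{R}$ with $S=\bigcup_n R_n$ and $\mu(R_n)<\infty$) and satisfies $\mu(\{x\})=0$ for all $x\in S$. If $\pi$ is a cr-set satisfying $P(\pi\cap A=\emptyset)=e^{-\mu(A)}$ for all $A\in\mathcal{R}$, then $\pi$ is a Poisson process with intensity $\mu$.
   Context: $\Delta=\{(x,x)\mid x\in S\}$. $(\Omega,\mathcal{F},P)$ is a probability space; $C(S)$ is the set of countable subsets of $S$; $N_A(M)=|A\cap M|$; $\mathcal{C}(\mathcal{S})=\sigma(N_A\mid A\in\mathcal{S})$; a cr-set is an $\mathcal{F}$-$\mathcal{C}(\mathcal{S})$ measurable map $\pi:\Omega\to C(S)$ with law $P_\pi$. A cr-set $\pi$ is a Poisson process with intensity $\mu$ if (under $P_\pi$) $N_{A_1},\dots,N_{A_n}$ are independent for any pairwise disjoint $A_1,\dots,A_n\in\mathcal{S}$, and $N_A(\pi)$ has a Poisson distribution with mean $\mu(A)$ for each $A\in\mathcal{S}$, where $\delta_0$ and $\delta_\infty$ count as Poisson distributions (with means $0$ and $\infty$); the intensity is $\mu(A)=E(N_A(\pi))$. *)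

theory Defs
  imports "HOL-Probability.Probability"
begin

definition Ncount :: "'a set \<Rightarrow> 'a set \<Rightarrow> enat" where
  "Ncount A X = (if finite (A \<inter> X) then enat (card (A \<inter> X)) else \<infinity>)"

definition cr_sets :: "'a measure \<Rightarrow> 'a set set" where
  "cr_sets M = {X. X \<subseteq> space M \<and> countable X}"

text \<open>The measurable space (C(S), sigma(N_A | A in S)). Since each N_A takes values in the
  countable set enat, sigma(N_A) is generated by its level sets.\<close>
definition cr_space :: "'a measure \<Rightarrow> 'a set measure" where
  "cr_space M = sigma (cr_sets M)
     {{X \<in> cr_sets M. Ncount A X = k} | A k. A \<in> sets M}"

definition cr_set :: "'w measure \<Rightarrow> 'a measure \<Rightarrow> ('w \<Rightarrow> 'a set) \<Rightarrow> bool" where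
  "cr_set P M \<pi> \<longleftrightarrow> \<pi> \<in> measurable P (cr_space M)"

definition poisson_law :: "enat measure \<Rightarrow> ennreal \<Rightarrow> bool" where
  "poisson_law Q m \<longleftrightarrow>
     (if m = \<infinity> then measure Q {\<infinity>} = 1
      else (\<forall>k::nat. measure Q {enat k} = exp (- enn2real m) * (enn2real m) ^ k / fact k))"

definition poisson_process :: "'w measure \<Rightarrow> 'a measure \<Rightarrow> ('w \<Rightarrow> 'a set) \<Rightarrow> bool" where
  "poisson_process P M \<pi> \<longleftrightarrow>
     (let P\<pi> = distr P (cr_space M) \<pi> in
      (\<forall>(n::nat) (A::nat \<Rightarrow> 'a set). (\<forall>i<n. A i \<in> sets M) \<and> disjoint_family_on A {..<n} \<longrightarrow>
          prob_space.indep_vars P\<pi> (\<lambda>_. count_space UNIV) (\<lambda>i X. Ncount (A i) X) {..<n}) \<and>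
      (\<forall>A \<in> sets M. poisson_law (distr P\<pi> (count_space UNIV) (Ncount A)) (emeasure M A)))"

definition exp_neg :: "ennreal \<Rightarrow> real" where
  "exp_neg m = (if m = \<infinity> then 0 else exp (- enn2real m))"

end

theory Submission
  imports Defs
begin

lemma countable_subgen:
  assumes "X \<in> sigma_sets \<Omega> G"
  shows "\<exists>G'. countable G' \<and> G' \<subseteq> G \<and> X \<in> sigma_sets \<Omega> G'"
  using assms
proof induction
  case (Basic a) then show ?case by (intro exI[of _ "{a}"]) auto
next
  case Empty then show ?case by (intro exI[of _ "{}"]) (auto intro: sigma_sets.Empty)
next
  case (Compl a)
  then obtain G' where "countable G'" "G' \<subseteq> G" "a \<in> sigma_sets \<Omega> G'" by blast
  then show ?case by (intro exI[of _ G']) (auto intro: sigma_sets.Compl)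
next
  case (Union a)
  then obtain G' where G': "\<And>i. countable (G' i) \<and> G' i \<subseteq> G \<and> a i \<in> sigma_sets \<Omega> (G' i)" by metis
  have "a i \<in> sigma_sets \<Omega> (\<Union>i. G' i)" for i
    using G' sigma_sets_mono'[of "G' i" "\<Union>i. G' i" \<Omega>] by blast
  then show ?case using G' by (intro exI[of _ "\<Union>i. G' i"]) (auto intro: sigma_sets.Union)
qed

lemma sigma_sets_same_mem:
  assumes "e \<in> sigma_sets \<Omega> F" "x \<in> \<Omega>" "y \<in> \<Omega>" "\<forall>f\<in>F. x \<in> f \<longleftrightarrow> y \<in> f"
  shows "x \<in> e \<longleftrightarrow> y \<in> e"
  using assms(1)
proof induction
  case (Union a) then show ?case by auto
qed (use assms in auto)

lemma separating_seq:
  assumes diag: "{(x, x) | x. x \<in> space M} \<in> sets (M \<Otimes>\<^sub>M M)"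
   and gen: "sigma_sets (space M) R = sets M" and e: "{} \<in> R"
  shows "\<exists>D::nat \<Rightarrow> 'a set. range D \<subseteq> R \<and> (\<forall>x\<in>space M. \<forall>y\<in>space M. (\<forall>j. x \<in> D j \<longleftrightarrow> y \<in> D j) \<longrightarrow> x = y)"
proof -
  let ?\<Omega> = "space M"
  let ?Rect = "{a \<times> b | a b. a \<in> sets M \<and> b \<in> sets M}"
  obtain G1 where G1: "countable G1" "G1 \<subseteq> ?Rect" "{(x, x) | x. x \<in> space M} \<in> sigma_sets (?\<Omega> \<times> ?\<Omega>) G1"
    using countable_subgen[of _ "?\<Omega> \<times> ?\<Omega>" ?Rect] diag unfolding sets_pair_measure by blast
  have "\<forall>r\<in>G1. \<exists>a b. r = a \<times> b \<and> a \<in> sets M \<and> b \<in> sets M" using G1(2) by blast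
  then obtain fa fb where fab: "\<And>r. r \<in> G1 \<Longrightarrow> r = fa r \<times> fb r \<and> fa r \<in> sets M \<and> fb r \<in> sets M" by metis
  define E where "E = fa ` G1 \<union> fb ` G1"
  have cE: "countable E" unfolding E_def using G1(1) by auto
  have EM: "E \<subseteq> sets M" unfolding E_def using fab by auto
  have "\<forall>e\<in>E. \<exists>F. countable F \<and> F \<subseteq> R \<and> e \<in> sigma_sets ?\<Omega> F"
    using EM gen countable_subgen[of _ ?\<Omega> R] by blast
  then obtain Fe where Fe: "\<And>e. e \<in> E \<Longrightarrow> countable (Fe e) \<and> Fe e \<subseteq> R \<and> e \<in> sigma_sets ?\<Omega> (Fe e)" by metis
  define F where "F = insert {} (\<Union>e\<in>E. Fe e)"
  have cF: "countable F" unfolding F_def using cE Fe by auto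
  have FR: "F \<subseteq> R" unfolding F_def using Fe e by auto
  define D where "D = from_nat_into F"
  have rD: "range D = F" unfolding D_def using cF by (intro range_from_nat_into) (auto simp: F_def)
  show ?thesis
  proof (intro exI[of _ D] conjI ballI impI)
    show "range D \<subseteq> R" using rD FR by auto
  next
    fix x y assume x: "x \<in> ?\<Omega>" and y: "y \<in> ?\<Omega>" and xy: "\<forall>j. x \<in> D j \<longleftrightarrow> y \<in> D j"
    have xyF: "\<forall>f\<in>F. x \<in> f \<longleftrightarrow> y \<in> f" using xy rD by auto
    have xyE: "x \<in> e \<longleftrightarrow> y \<in> e" if "e \<in> E" for e
    proof -
      have "e \<in> sigma_sets ?\<Omega> F"
        using Fe[OF that] sigma_sets_mono'[of "Fe e" F ?\<Omega>] that unfolding F_def by blast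
      then show ?thesis using sigma_sets_same_mem[OF _ x y xyF] by blast
    qed
    have "(x, x) \<in> Z \<longleftrightarrow> (x, y) \<in> Z" if "Z \<in> sigma_sets (?\<Omega> \<times> ?\<Omega>) G1" for Z
      using that
    proof induction
      case (Basic r)
      then have "r = fa r \<times> fb r" "fb r \<in> E" using fab unfolding E_def by auto
      then show ?case using xyE by auto
    next
      case (Compl a) then show ?case using x y by auto
    qed auto
    from this[OF G1(3)] show "x = y" using x by auto
  qed
qed

definition Vd :: "'a measure \<Rightarrow> 'a set \<Rightarrow> 'a set set" where
  "Vd M C = {X \<in> cr_sets M. X \<inter> C = {}}"

definition cell :: "'a measure \<Rightarrow> (nat \<Rightarrow> 'a set) \<Rightarrow> 'a set \<Rightarrow> bool list \<Rightarrow> 'a set" where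
  "cell M D A bs = A \<inter> (\<Inter>j<length bs. if bs!j then D j else space M - D j)"

definition hitset :: "'a measure \<Rightarrow> (nat \<Rightarrow> 'a set) \<Rightarrow> 'a set \<Rightarrow> nat \<Rightarrow> 'a set \<Rightarrow> bool list set" where
  "hitset M D A n X = {bs. length bs = n \<and> X \<inter> cell M D A bs \<noteq> {}}"

definition hits :: "'a measure \<Rightarrow> (nat \<Rightarrow> 'a set) \<Rightarrow> 'a set \<Rightarrow> nat \<Rightarrow> 'a set \<Rightarrow> nat" where
  "hits M D A n X = card (hitset M D A n X)"

lemma finite_len: "finite {bs::bool list. length bs = n}"
  using finite_lists_length_eq[of "UNIV::bool set" n] by simp

lemma finite_hitset: "finite (hitset M D A n X)"
  unfolding hitset_def by (rule finite_subset[OF _ finite_len[of n]]) auto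

lemma mem_cell: "x \<in> cell M D A bs \<longleftrightarrow> x \<in> A \<and> (\<forall>j<length bs. if bs!j then x \<in> D j else x \<in> space M \<and> x \<notin> D j)"
  unfolding cell_def by (auto split: if_splits)

lemma all_less_snoc: "(\<forall>j<length (bs@[c]). P j ((bs@[c])!j)) \<longleftrightarrow> (\<forall>j<length bs. P j (bs!j)) \<and> P (length bs) c"
  by (auto simp: nth_append less_Suc_eq)

lemma cell_disj:
  assumes "length bs = length cs" "bs \<noteq> cs"
  shows "cell M D A bs \<inter> cell M D A cs = {}"
proof -
  obtain j where j: "j < length bs" "bs!j \<noteq> cs!j" using assms nth_equalityI by blast
  show ?thesis
  proof (rule ccontr)
    assume "cell M D A bs \<inter> cell M D A cs \<noteq> {}"
    then obtain x where x: "x \<in> cell M D A bs" "x \<in> cell M D A cs" by blast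
    have "(x \<in> D j) = bs!j" "(x \<in> D j) = cs!j"
      using x j assms(1) unfolding mem_cell by (auto split: if_splits)
    then show False using j by simp
  qed
qed

lemma cell_sub: "cell M D A bs \<subseteq> A" by (simp add: subset_iff mem_cell)

lemma mem_cell_snoc: "x \<in> cell M D A (bs @ [c]) \<longleftrightarrow> x \<in> cell M D A bs \<and> (if c then x \<in> D (length bs) else x \<in> space M \<and> x \<notin> D (length bs))"
proof -
  have "x \<in> cell M D A (bs @ [c]) \<longleftrightarrow> x \<in> A \<and> (\<forall>j<length (bs@[c]). if (bs@[c])!j then x \<in> D j else x \<in> space M \<and> x \<notin> D j)"
    by (rule mem_cell)
  also have "\<dots> \<longleftrightarrow> x \<in> cell M D A bs \<and> (if c then x \<in> D (length bs) else x \<in> space M \<and> x \<notin> D (length bs))"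
    unfolding all_less_snoc[where P="\<lambda>j b. if b then x \<in> D j else x \<in> space M \<and> x \<notin> D j"] mem_cell by blast
  finally show ?thesis .
qed

lemma cell_snoc_sub: "cell M D A (bs @ [c]) \<subseteq> cell M D A bs"
  by (auto simp: mem_cell_snoc)

lemma cell_snoc_cover:
  assumes "A \<subseteq> space M"
  shows "cell M D A bs \<subseteq> cell M D A (bs @ [True]) \<union> cell M D A (bs @ [False])"
proof
  fix x assume x: "x \<in> cell M D A bs"
  then have "x \<in> space M" using assms cell_sub[of M D A bs] by blast
  then show "x \<in> cell M D A (bs @ [True]) \<union> cell M D A (bs @ [False])"
    using x by (auto simp: mem_cell_snoc)
qed

definition pat :: "(nat \<Rightarrow> 'a set) \<Rightarrow> nat \<Rightarrow> 'a \<Rightarrow> bool list" where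
  "pat D n x = map (\<lambda>j. x \<in> D j) [0..<n]"

lemma in_cell_pat:
  assumes "x \<in> A" "A \<subseteq> space M"
  shows "x \<in> cell M D A (pat D n x)"
  using assms unfolding mem_cell pat_def by auto

lemma cell_cover:
  assumes "A \<subseteq> space M"
  shows "A = (\<Union>bs\<in>{bs. length bs = n}. cell M D A bs)"
proof (rule equalityI)
  show "A \<subseteq> (\<Union>bs\<in>{bs. length bs = n}. cell M D A bs)"
  proof
    fix x assume x: "x \<in> A"
    have "length (pat D n x) = n" by (simp add: pat_def)
    then show "x \<in> (\<Union>bs\<in>{bs. length bs = n}. cell M D A bs)" using in_cell_pat[OF x assms] by blast
  qed
  show "(\<Union>bs\<in>{bs. length bs = n}. cell M D A bs) \<subseteq> A" using cell_sub[of M D A] by blast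
qed

lemma hits_Suc:
  assumes "A \<subseteq> space M"
  shows "hits M D A n X \<le> hits M D A (Suc n) X"
proof -
  define f where "f bs = (if X \<inter> cell M D A (bs @ [True]) \<noteq> {} then bs @ [True] else bs @ [False])" for bs
  have "inj_on f (hitset M D A n X)" unfolding f_def inj_on_def by auto
  moreover have "f ` hitset M D A n X \<subseteq> hitset M D A (Suc n) X"
  proof
    fix cs assume "cs \<in> f ` hitset M D A n X"
    then obtain bs where bs: "bs \<in> hitset M D A n X" "cs = f bs" by auto
    have "X \<inter> cell M D A bs \<noteq> {}" "length bs = n" using bs(1) unfolding hitset_def by auto
    then have "X \<inter> cell M D A (bs @ [True]) \<noteq> {} \<or> X \<inter> cell M D A (bs @ [False]) \<noteq> {}"
      using cell_snoc_cover[OF assms, of D bs] by blast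
    then show "cs \<in> hitset M D A (Suc n) X" using bs \<open>length bs = n\<close> unfolding f_def hitset_def by auto
  qed
  ultimately show ?thesis unfolding hits_def
    by (rule card_inj_on_le[OF _ _ finite_hitset])
qed

lemma hits_mono:
  assumes "A \<subseteq> space M" "n \<le> m"
  shows "hits M D A n X \<le> hits M D A m X"
  using assms(2) by (induction m) (auto simp: le_Suc_eq intro: le_trans hits_Suc[OF assms(1)])

lemma hits_le:
  assumes "finite (X \<inter> A)"
  shows "hits M D A n X \<le> card (X \<inter> A)"
proof -
  define f where "f bs = (SOME x. x \<in> X \<inter> cell M D A bs)" for bs
  have f: "f bs \<in> X \<inter> cell M D A bs" if "bs \<in> hitset M D A n X" for bs
  proof -
    have "\<exists>x. x \<in> X \<inter> cell M D A bs" using that unfolding hitset_def by auto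
    then show ?thesis unfolding f_def by (rule someI_ex)
  qed
  have "inj_on f (hitset M D A n X)"
  proof (rule inj_onI)
    fix bs cs assume a: "bs \<in> hitset M D A n X" "cs \<in> hitset M D A n X" "f bs = f cs"
    show "bs = cs"
    proof (rule ccontr)
      assume "bs \<noteq> cs"
      then have "cell M D A bs \<inter> cell M D A cs = {}"
        using a by (intro cell_disj) (auto simp: hitset_def)
      then show False using f[OF a(1)] f[OF a(2)] a(3) by auto
    qed
  qed
  moreover have "f ` hitset M D A n X \<subseteq> X \<inter> A" using f cell_sub[of M D A] by fastforce
  ultimately show ?thesis unfolding hits_def by (rule card_inj_on_le[OF _ _ assms])
qed

lemma hits_large:
  assumes sep: "\<forall>x\<in>space M. \<forall>y\<in>space M. (\<forall>j. x \<in> D j \<longleftrightarrow> y \<in> D j) \<longrightarrow> x = y"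
    and F: "finite F" "F \<subseteq> X \<inter> A" and A: "A \<subseteq> space M"
  shows "\<exists>n. card F \<le> hits M D A n X"
proof -
  have "\<forall>p\<in>F\<times>F. \<exists>j. fst p \<noteq> snd p \<longrightarrow> (fst p \<in> D j) \<noteq> (snd p \<in> D j)"
  proof
    fix p assume p: "p \<in> F\<times>F"
    show "\<exists>j. fst p \<noteq> snd p \<longrightarrow> (fst p \<in> D j) \<noteq> (snd p \<in> D j)"
    proof (cases "fst p = snd p")
      case False
      have "fst p \<in> space M" "snd p \<in> space M" using p F A by auto
      then show ?thesis using sep False by metis
    qed simp
  qed
  then obtain js where js: "\<And>p. p \<in> F\<times>F \<Longrightarrow> fst p \<noteq> snd p \<Longrightarrow> (fst p \<in> D (js p)) \<noteq> (snd p \<in> D (js p))"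
    by metis
  define n where "n = Suc (\<Sum>p\<in>F\<times>F. js p)"
  have jn: "js p < n" if "p \<in> F\<times>F" for p
    unfolding n_def using member_le_sum[of p "F\<times>F" js] that F(1) by auto
  have "inj_on (pat D n) F"
  proof (rule inj_onI, rule ccontr)
    fix x y assume xy: "x \<in> F" "y \<in> F" "pat D n x = pat D n y" "x \<noteq> y"
    have "(x \<in> D (js (x,y))) \<noteq> (y \<in> D (js (x,y)))" using js[of "(x,y)"] xy by auto
    moreover have "pat D n x ! js (x,y) = (x \<in> D (js (x,y)))" "pat D n y ! js (x,y) = (y \<in> D (js (x,y)))"
      using jn[of "(x,y)"] xy unfolding pat_def by auto
    ultimately show False using xy(3) by auto
  qed
  moreover have "pat D n ` F \<subseteq> hitset M D A n X"
  proof
    fix bs assume "bs \<in> pat D n ` F"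
    then obtain x where x: "x \<in> F" "bs = pat D n x" by auto
    then have "x \<in> X" "x \<in> cell M D A (pat D n x)" using in_cell_pat[OF _ A, of x D n] F(2) by auto
    moreover have "length (pat D n x) = n" by (simp add: pat_def)
    ultimately show "bs \<in> hitset M D A n X" unfolding hitset_def using x by auto
  qed
  ultimately have "card F \<le> hits M D A n X"
    unfolding hits_def by (rule card_inj_on_le[OF _ _ finite_hitset])
  then show ?thesis by blast
qed

lemma hits_Ncount_le:
  "enat (hits M D A n X) \<le> Ncount A X"
  unfolding Ncount_def using hits_le[of X A M D n] by (auto simp: Int_commute)

lemma hits_Ncount_reach:
  assumes sep: "\<forall>x\<in>space M. \<forall>y\<in>space M. (\<forall>j. x \<in> D j \<longleftrightarrow> y \<in> D j) \<longrightarrow> x = y"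
    and A: "A \<subseteq> space M" and k: "enat k \<le> Ncount A X"
  shows "\<exists>n. k \<le> hits M D A n X"
proof (cases "finite (A \<inter> X)")
  case True
  then have "k \<le> card (X \<inter> A)" using k unfolding Ncount_def by (auto simp: Int_commute)
  with hits_large[OF sep _ _ A, of "X \<inter> A" X] True show ?thesis
    by (metis Int_commute order_refl le_trans)
next
  case False
  then obtain F where "finite F" "card F = k" "F \<subseteq> X \<inter> A"
    using infinite_arbitrarily_large[of "X \<inter> A" k] by (auto simp: Int_commute)
  with hits_large[OF sep _ _ A, of F X] show ?thesis by auto
qed


lemma one_minus_exp_le: "0 \<le> (x::real) \<Longrightarrow> 1 - exp (-x) \<le> x"
  using exp_ge_add_one_self[of "-x"] by simp

lemma one_minus_exp_ge: "0 \<le> (x::real) \<Longrightarrow> x - x^2 \<le> 1 - exp (-x)"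
proof -
  assume x: "0 \<le> x"
  have "1 + x \<le> exp x" by (rule exp_ge_add_one_self)
  then have "exp (-x) * (1 + x) \<le> 1" by (simp add: exp_minus field_simps)
  moreover have "(1 - x + x^2) * (1 + x) \<ge> 1" using x by (simp add: algebra_simps power2_eq_square power3_eq_cube[symmetric])
  ultimately have "exp (-x) * (1 + x) \<le> (1 - x + x^2) * (1 + x)" by linarith
  then have "exp (-x) \<le> 1 - x + x^2" using x by (simp add: mult_le_cancel_right)
  then show ?thesis by simp
qed

lemma one_minus_ge_exp: "0 \<le> (a::real) \<Longrightarrow> a \<le> 1/2 \<Longrightarrow> exp (- a - 2 * a^2) \<le> 1 - a"
proof -
  assume a: "0 \<le> a" "a \<le> 1/2"
  have "- a - 2 * a^2 \<le> ln (1 - a)" using ln_one_minus_pos_lower_bound[OF a] .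
  then have "exp (- a - 2 * a^2) \<le> exp (ln (1 - a))" by simp
  also have "\<dots> = 1 - a" using a by simp
  finally show ?thesis .
qed

lemma prod_limit:
  fixes m :: "nat \<Rightarrow> 'b \<Rightarrow> real" and B :: "nat \<Rightarrow> 'b set"
  assumes fin: "\<And>n. finite (B n)" and pos: "\<And>n b. 0 \<le> m n b"
    and sumc: "\<And>n. (\<Sum>b\<in>B n. m n b) = c"
    and sq: "(\<lambda>n. \<Sum>b\<in>B n. (m n b)^2) \<longlonglongrightarrow> 0"
    and t: "0 \<le> t" "t \<le> 1"
  shows "(\<lambda>n. \<Prod>b\<in>B n. (1 - t * (1 - exp (- m n b)))) \<longlonglongrightarrow> exp (- t * c)"
proof -
  define q where "q n = (\<Sum>b\<in>B n. (m n b)^2)" for n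
  define a where "a n b = t * (1 - exp (- m n b))" for n b
  have a0: "0 \<le> a n b" for n b unfolding a_def using t pos[of n b] by simp
  have am: "a n b \<le> m n b" for n b
    unfolding a_def using t pos[of n b] one_minus_exp_le[of "m n b"]
    by (metis mult_le_cancel_right1 order_trans diff_ge_0_iff_ge exp_le_one_iff le_minus_iff neg_le_0_iff_le mult_right_mono mult_left_le_one_le)
  have a1: "a n b \<le> 1" for n b unfolding a_def using t pos[of n b]
    by (simp add: mult_le_one)
  have sa_up: "(\<Sum>b\<in>B n. a n b) \<le> t * c" for n
  proof -
    have "(\<Sum>b\<in>B n. a n b) \<le> (\<Sum>b\<in>B n. t * m n b)"
      unfolding a_def using t one_minus_exp_le[OF pos] by (intro sum_mono mult_left_mono) auto
    moreover have "(\<Sum>b\<in>B n. t * m n b) = t * c" using sumc[of n] sum_distrib_left[of t "m n" "B n"] by simp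
    ultimately show ?thesis by linarith
  qed
  have sa_low: "t * c - q n \<le> (\<Sum>b\<in>B n. a n b)" for n
  proof -
    have "(\<Sum>b\<in>B n. t * (m n b - (m n b)^2)) \<le> (\<Sum>b\<in>B n. a n b)"
      unfolding a_def using t one_minus_exp_ge[OF pos] by (intro sum_mono mult_left_mono) auto
    moreover have "(\<Sum>b\<in>B n. t * (m n b - (m n b)^2)) = t * c - t * q n"
      unfolding q_def using sumc[of n] sum_distrib_left[of t "m n" "B n"] sum_distrib_left[of t "\<lambda>b. (m n b)^2" "B n"]
      by (simp add: sum_subtractf right_diff_distrib)
    moreover have "t * q n \<le> q n" unfolding q_def using t by (intro mult_left_le_one_le sum_nonneg) auto
    ultimately show ?thesis by linarith
  qed
  have up: "(\<Prod>b\<in>B n. (1 - a n b)) \<le> exp (- t * c + q n)" for n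
  proof -
    have "(\<Prod>b\<in>B n. (1 - a n b)) \<le> (\<Prod>b\<in>B n. exp (- a n b))"
      using a1 exp_ge_add_one_self[of "- a n _"] by (intro prod_mono) (auto simp: a0)
    also have "\<dots> = exp (- (\<Sum>b\<in>B n. a n b))" using exp_sum[of "B n" "\<lambda>b. - a n b"] fin[of n] by (simp add: sum_negf)
    also have "\<dots> \<le> exp (- t * c + q n)" using sa_low[of n] by simp
    finally show ?thesis .
  qed
  have ev: "eventually (\<lambda>n. q n < 1/4) sequentially"
    using sq unfolding q_def[symmetric] by (rule order_tendstoD) simp
  have low: "exp (- t * c - 2 * q n) \<le> (\<Prod>b\<in>B n. (1 - a n b))" if "q n < 1/4" for n
  proof -
    have mhalf: "a n b \<le> 1/2" if b: "b \<in> B n" for b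
    proof -
      have "(m n b)^2 \<le> q n" unfolding q_def using fin b by (intro member_le_sum) auto
      then have "(m n b)^2 < (1/2)^2" using \<open>q n < 1/4\<close> by (simp add: power2_eq_square)
      then have "m n b < 1/2" using pos[of n b] power_less_imp_less_base by fastforce
      then show ?thesis using am[of n b] by linarith
    qed
    have sq2: "(\<Sum>b\<in>B n. (a n b)^2) \<le> q n"
      unfolding q_def using am a0 by (intro sum_mono power_mono) auto
    have "exp (- t * c - 2 * q n) \<le> exp (- (\<Sum>b\<in>B n. a n b) - 2 * (\<Sum>b\<in>B n. (a n b)^2))"
      using sa_up[of n] sq2 by simp
    also have "\<dots> = (\<Prod>b\<in>B n. exp (- a n b - 2 * (a n b)^2))"
      using exp_sum[of "B n" "\<lambda>b. - a n b - 2 * (a n b)^2"] fin[of n] by (simp add: sum_subtractf sum_negf sum_distrib_left)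
    also have "\<dots> \<le> (\<Prod>b\<in>B n. (1 - a n b))"
      using mhalf a0 by (intro prod_mono) (auto intro: one_minus_ge_exp)
    finally show ?thesis .
  qed
  have l1: "(\<lambda>n. exp (- t * c - 2 * q n)) \<longlonglongrightarrow> exp (- t * c - 2 * 0)"
    using sq unfolding q_def[symmetric] by (intro tendsto_intros)
  have l2: "(\<lambda>n. exp (- t * c + q n)) \<longlonglongrightarrow> exp (- t * c + 0)"
    using sq unfolding q_def[symmetric] by (intro tendsto_intros)
  have "(\<lambda>n. \<Prod>b\<in>B n. (1 - a n b)) \<longlonglongrightarrow> exp (- t * c)"
    using l1 l2 by (intro tendsto_sandwich[OF eventually_mono[OF ev low] always_eventually[OF allI[OF up]]]) auto
  then show ?thesis unfolding a_def .
qed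

lemma space_cr_space: "space (cr_space M) = cr_sets M"
  unfolding cr_space_def by (rule space_measure_of) (auto simp: cr_sets_def)

lemma sets_cr_space: "sets (cr_space M) = sigma_sets (cr_sets M) {{X \<in> cr_sets M. Ncount A X = k} | A k. A \<in> sets M}"
  unfolding cr_space_def by (rule sets_measure_of) auto

lemma Ncount_measurable: 
  assumes "A \<in> sets M" shows "Ncount A \<in> measurable (cr_space M) (count_space UNIV)"
  unfolding measurable_count_space_eq2_countable
proof (intro conjI ballI)
  fix k :: enat
  have "Ncount A -` {k} \<inter> space (cr_space M) = {X \<in> cr_sets M. Ncount A X = k}"
    by (auto simp: space_cr_space)
  also have "\<dots> \<in> sets (cr_space M)" unfolding sets_cr_space using assms by (intro sigma_sets.Basic) blast
  finally show "Ncount A -` {k} \<inter> space (cr_space M) \<in> sets (cr_space M)" .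
qed auto

lemma Ncount_zero: "Ncount A X = 0 \<longleftrightarrow> X \<inter> A = {}"
  unfolding Ncount_def by (auto simp: zero_enat_def Int_commute)

lemma Vd_sets:
  assumes "C \<in> sets M" shows "Vd M C \<in> sets (cr_space M)"
proof -
  have "Vd M C = {X \<in> cr_sets M. Ncount C X = 0}" unfolding Vd_def Ncount_zero by auto
  also have "\<dots> \<in> sets (cr_space M)" unfolding sets_cr_space using assms by (intro sigma_sets.Basic) blast
  finally show ?thesis .
qed

lemma cell_Nil: "cell M D A [] = A" unfolding cell_def by simp

lemma cell_snoc_eq:
  assumes "A \<subseteq> space M"
  shows "cell M D A (bs @ [c]) = (if c then cell M D A bs \<inter> D (length bs) else cell M D A bs - D (length bs))"
  using assms cell_sub[of M D A bs] by (auto simp: mem_cell_snoc)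

lemma cell_in_ring:
  assumes K: "ring_of_sets (space M) K" "range D \<subseteq> K" and A: "A \<in> K"
  shows "cell M D A bs \<in> K"
proof (induction bs rule: rev_induct)
  case Nil then show ?case using A by (simp add: cell_Nil)
next
  case (snoc c bs)
  interpret ring_of_sets "space M" K by fact
  have "A \<subseteq> space M" using A sets_into_space by auto
  moreover have "D (length bs) \<in> K" using K(2) by auto
  ultimately show ?case using snoc by (cases c) (auto simp: cell_snoc_eq)
qed

lemma prod_indicator_Inter:
  assumes "finite U"
  shows "(\<Prod>b\<in>U. indicator (S b) x :: real) = indicator (\<Inter>b\<in>U. S b) x"
  using assms by (induction U rule: finite_induct) (auto simp: indicator_def)

lemma prod_if_power:
  assumes "finite B"
  shows "(\<Prod>b\<in>B. (if P b then 1 else s)) = (s::real) ^ card {b\<in>B. \<not> P b}"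
proof -
  have "(\<Prod>b\<in>B. (if P b then 1 else s)) = (\<Prod>b\<in>{b\<in>B. \<not> P b}. s)"
    using assms by (intro prod.mono_neutral_cong_right) auto
  then show ?thesis by simp
qed

lemma exp_neg_fin: "x \<noteq> \<infinity> \<Longrightarrow> exp_neg x = exp (- enn2real x)"
  unfolding exp_neg_def by simp

locale crq = prob_space Q for Q :: "'a set measure" +
  fixes M :: "'a measure" and D :: "nat \<Rightarrow> 'a set"
  assumes sQ: "sets Q = sets (cr_space M)"
    and D: "range D \<subseteq> sets M"
    and sep: "\<forall>x\<in>space M. \<forall>y\<in>space M. (\<forall>j. x \<in> D j \<longleftrightarrow> y \<in> D j) \<longrightarrow> x = y"
    and diag: "{(x, x) | x. x \<in> space M} \<in> sets (M \<Otimes>\<^sub>M M)"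
    and nonatomic: "\<forall>x \<in> space M. emeasure M {x} = 0"
begin

lemma spQ: "space Q = cr_sets M"
  using sets_eq_imp_space_eq[OF sQ] space_cr_space by simp

lemma N_meas: "A \<in> sets M \<Longrightarrow> Ncount A \<in> measurable Q (count_space UNIV)"
  using Ncount_measurable measurable_cong_sets[OF sQ refl] by blast

lemma Vd_ev: "C \<in> sets M \<Longrightarrow> Vd M C \<in> events"
  using Vd_sets sQ by blast

lemma hits_eq:
  assumes "X \<in> space Q"
  shows "hits M D A n X = card {b\<in>{bs. length bs = n}. \<not> X \<in> Vd M (cell M D A b)}"
  using assms unfolding hits_def hitset_def Vd_def spQ by (intro arg_cong[where f=card]) auto

lemma pgf_hits:
  assumes K: "ring_of_sets (space M) K" "K \<subseteq> sets M" "range D \<subseteq> K"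
    and VF: "\<And>C. C \<in> K \<Longrightarrow> prob (Vd M C) = exp_neg (emeasure M C)"
    and A: "A \<in> K" "emeasure M A < \<infinity>" and s: "0 \<le> s" "s \<le> 1"
  shows "expectation (\<lambda>X. s ^ hits M D A n X)
     = (\<Prod>b\<in>{bs. length bs = n}. (s + (1 - s) * exp (- enn2real (emeasure M (cell M D A b)))))"
proof -
  interpret K: ring_of_sets "space M" K by fact
  define B where "B = {bs::bool list. length bs = n}"
  define cl where "cl b = cell M D A b" for b
  define m where "m b = enn2real (emeasure M (cl b))" for b
  have finB: "finite B" unfolding B_def by (rule finite_len)
  have clK: "cl b \<in> K" for b unfolding cl_def by (rule cell_in_ring[OF K(1,3) A(1)])
  have clM: "cl b \<in> sets M" for b using clK K(2) by auto
  have cl_fin: "emeasure M (cl b) < \<infinity>" for b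
    using emeasure_mono[OF cell_sub[of M D A b], of M] A K(2) unfolding cl_def by auto
  have disj: "disjoint_family_on cl U" if "U \<subseteq> B" for U
    unfolding disjoint_family_on_def
  proof (intro ballI impI)
    fix a b assume "a \<in> U" "b \<in> U" "a \<noteq> b"
    then show "cl a \<inter> cl b = {}" unfolding cl_def using that by (intro cell_disj) (auto simp: B_def)
  qed
  define W where "W U = Vd M (\<Union>b\<in>U. cl b)" for U
  have W_ev: "W U \<in> events" if "U \<subseteq> B" for U
    unfolding W_def using that finite_subset[OF that finB] clM by (intro Vd_ev) auto
  have W_prob: "prob (W U) = (\<Prod>b\<in>U. exp (- m b))" if U: "U \<subseteq> B" for U
  proof -
    have finU: "finite U" using finite_subset[OF U finB] .
    have "(\<Union>b\<in>U. cl b) \<in> K" using finU clK by auto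
    then have "prob (W U) = exp_neg (emeasure M (\<Union>b\<in>U. cl b))" unfolding W_def by (rule VF)
    also have "emeasure M (\<Union>b\<in>U. cl b) = (\<Sum>b\<in>U. emeasure M (cl b))"
      using disj[OF U] finU clM by (intro sum_emeasure[symmetric]) auto
    also have "exp_neg \<dots> = exp (- enn2real (\<Sum>b\<in>U. emeasure M (cl b)))"
      using cl_fin finU by (intro exp_neg_fin) (auto simp: less_top)
    also have "enn2real (\<Sum>b\<in>U. emeasure M (cl b)) = (\<Sum>b\<in>U. m b)"
      unfolding m_def using cl_fin by (subst enn2real_sum) auto
    also have "exp (- (\<Sum>b\<in>U. m b)) = (\<Prod>b\<in>U. exp (- m b))"
      using exp_sum[of U "\<lambda>b. - m b"] finU by (simp add: sum_negf)
    finally show ?thesis .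
  qed
  have pw: "s ^ hits M D A n X = (\<Sum>U\<in>Pow B. ((1-s)^card U * s^card (B - U)) * indicator (W U) X)"
    if X: "X \<in> space Q" for X
  proof -
    have "s ^ hits M D A n X = (\<Prod>b\<in>B. (if X \<in> Vd M (cl b) then 1 else s))"
      using prod_if_power[OF finB, of "\<lambda>b. X \<in> Vd M (cl b)" s] hits_eq[OF X] unfolding B_def cl_def by simp
    also have "\<dots> = (\<Prod>b\<in>B. (1 - s) * indicator (Vd M (cl b)) X + s)"
      by (intro prod.cong) (auto simp: indicator_def)
    also have "\<dots> = (\<Sum>U\<in>Pow B. (\<Prod>b\<in>U. (1 - s) * indicator (Vd M (cl b)) X) * (\<Prod>b\<in>B - U. s))"
      by (rule prod_add[OF finB])
    also have "\<dots> = (\<Sum>U\<in>Pow B. ((1-s)^card U * s^card (B - U)) * indicator (W U) X)"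
    proof (intro sum.cong refl)
      fix U assume U: "U \<in> Pow B"
      have finU: "finite U" using finite_subset[of U B] U finB by auto
      have "(\<Prod>b\<in>U. (1 - s) * indicator (Vd M (cl b)) X) = (1-s)^card U * (\<Prod>b\<in>U. indicator (Vd M (cl b)) X :: real)"
        by (simp add: prod.distrib)
      also have "(\<Prod>b\<in>U. indicator (Vd M (cl b)) X :: real) = indicator (\<Inter>b\<in>U. Vd M (cl b)) X"
        by (rule prod_indicator_Inter[OF finU])
      also have "indicator (\<Inter>b\<in>U. Vd M (cl b)) X = (indicator (W U) X :: real)"
        using X unfolding W_def Vd_def spQ by (auto simp: indicator_def)
      finally show "(\<Prod>b\<in>U. (1 - s) * indicator (Vd M (cl b)) X) * (\<Prod>b\<in>B - U. s)
          = ((1-s)^card U * s^card (B - U)) * indicator (W U) X" by simp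
    qed
    finally show ?thesis .
  qed
  have "expectation (\<lambda>X. s ^ hits M D A n X) = expectation (\<lambda>X. \<Sum>U\<in>Pow B. ((1-s)^card U * s^card (B - U)) * indicator (W U) X)"
    by (intro Bochner_Integration.integral_cong refl pw)
  also have "\<dots> = (\<Sum>U\<in>Pow B. expectation (\<lambda>X. ((1-s)^card U * s^card (B - U)) * indicator (W U) X))"
    using W_ev by (intro Bochner_Integration.integral_sum integrable_mult_right integrable_real_indicator) (auto simp: less_top[symmetric])
  also have "\<dots> = (\<Sum>U\<in>Pow B. ((1-s)^card U * s^card (B - U)) * prob (W U))"
    using W_ev by (intro sum.cong refl) (auto simp: Int_absorb2 sets.sets_into_space)
  also have "\<dots> = (\<Sum>U\<in>Pow B. (\<Prod>b\<in>U. (1 - s) * exp (- m b)) * (\<Prod>b\<in>B - U. s))"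
    using W_prob finB by (intro sum.cong refl) (auto simp: prod.distrib finite_subset)
  also have "\<dots> = (\<Prod>b\<in>B. (1 - s) * exp (- m b) + s)"
    by (rule prod_add[OF finB, symmetric])
  finally show ?thesis unfolding B_def m_def cl_def by (simp add: add.commute)
qed

end

lemma ring_sets: "ring_of_sets (space M) (sets M)"
  using sets.sigma_algebra_axioms by (simp add: sigma_algebra_def algebra_iff_Un ring_of_sets_iff) blast

context crq begin

lemma cell_sets: "A \<in> sets M \<Longrightarrow> cell M D A bs \<in> sets M"
  using cell_in_ring[OF ring_sets D] by blast

lemma cells_sq:
  assumes A: "A \<in> sets M" "emeasure M A < \<infinity>"
  shows "(\<lambda>n. \<Sum>b\<in>{bs. length bs = n}. (enn2real (emeasure M (cell M D A b)))^2) \<longlonglongrightarrow> 0"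
proof -
  define M' where "M' = density M (indicator A)"
  define cl where "cl b = cell M D A b" for b
  have sM': "sets M' = sets M" unfolding M'_def by simp
  have spM': "space M' = space M" unfolding M'_def by simp
  have clM: "cl b \<in> sets M" for b unfolding cl_def using cell_sets[OF A(1)] .
  have em': "emeasure M' X = emeasure M (A \<inter> X)" if "X \<in> sets M" for X
    unfolding M'_def using emeasure_restricted[OF A(1) that] .
  have emcl: "emeasure M' (cl b) = emeasure M (cl b)" for b
    using em'[OF clM] cell_sub[of M D A b] unfolding cl_def by (simp add: Int_absorb1)
  interpret M': finite_measure M'
    by (rule finite_measureI) (use em' A in \<open>auto simp: spM' Int_absorb2 sets.sets_into_space\<close>)
  interpret P: pair_sigma_finite M' M' ..
  have sP: "sets (M' \<Otimes>\<^sub>M M') = sets (M \<Otimes>\<^sub>M M)"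
    by (intro sets_pair_measure_cong sM')
  define B where "B n = {bs::bool list. length bs = n}" for n
  have finB: "finite (B n)" for n unfolding B_def by (rule finite_len)
  define T where "T n = (\<Union>b\<in>B n. cl b \<times> cl b)" for n
  have T_sets: "T n \<in> sets (M' \<Otimes>\<^sub>M M')" for n
    unfolding T_def using finB clM by (intro sets.finite_UN) (auto simp: sM')
  have emT: "emeasure (M' \<Otimes>\<^sub>M M') (T n) = (\<Sum>b\<in>B n. emeasure M (cl b) ^ 2)" for n
  proof -
    have "emeasure (M' \<Otimes>\<^sub>M M') (T n) = (\<Sum>b\<in>B n. emeasure (M' \<Otimes>\<^sub>M M') (cl b \<times> cl b))"
      unfolding T_def
    proof (rule sum_emeasure[symmetric])
      show "(\<lambda>b. cl b \<times> cl b) ` B n \<subseteq> sets (M' \<Otimes>\<^sub>M M')" using clM by (auto simp: sM')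
      show "disjoint_family_on (\<lambda>b. cl b \<times> cl b) (B n)"
        unfolding disjoint_family_on_def B_def cl_def using cell_disj by fastforce
    qed (rule finB)
    also have "\<dots> = (\<Sum>b\<in>B n. emeasure M (cl b) ^ 2)"
      using clM by (intro sum.cong refl) (simp add: M'.emeasure_pair_measure_Times sM' emcl power2_eq_square)
    finally show ?thesis .
  qed
  have fincl0: "emeasure M (cl b) \<noteq> top" for b
    using emeasure_mono[OF cell_sub[of M D A b], of M] A unfolding cl_def by (auto simp: top_unique)
  have decT: "decseq T"
  proof (rule decseq_SucI, rule subsetI)
    fix n p assume "p \<in> T (Suc n)"
    then obtain b where b: "length b = Suc n" "p \<in> cl b \<times> cl b" unfolding T_def B_def by auto
    then have "b \<noteq> []" by auto
    then have "b = butlast b @ [last b]" by simp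
    then have "cl b \<subseteq> cl (butlast b)" unfolding cl_def by (metis cell_snoc_sub)
    then show "p \<in> T n" using b unfolding T_def B_def by (intro UN_I[of "butlast b"]) auto
  qed
  define Dg where "Dg = {(x, x) | x. x \<in> space M}"
  have InT: "(\<Inter>n. T n) \<subseteq> Dg"
  proof
    fix p assume p: "p \<in> (\<Inter>n. T n)"
    obtain x y where xy: "p = (x, y)" by force
    have same: "x \<in> D j \<longleftrightarrow> y \<in> D j" for j
    proof -
      from p have "p \<in> T (Suc j)" by auto
      then obtain b where b: "length b = Suc j" "x \<in> cl b" "y \<in> cl b" unfolding T_def B_def xy by auto
      have "(x \<in> D j) = b!j" "(y \<in> D j) = b!j"
        using b unfolding cl_def mem_cell by (auto split: if_splits)
      then show ?thesis by simp
    qed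
    from p have "p \<in> T 0" by auto
    then have "x \<in> A" "y \<in> A" unfolding T_def B_def xy cl_def by (auto simp: cell_Nil)
    then have "x \<in> space M" "y \<in> space M" using A(1) sets.sets_into_space by auto
    then show "p \<in> Dg" using sep same unfolding Dg_def xy by auto
  qed
  have Dg_sets: "Dg \<in> sets (M' \<Otimes>\<^sub>M M')" unfolding Dg_def sP using diag .
  have Dg0: "emeasure (M' \<Otimes>\<^sub>M M') Dg = 0"
  proof -
    have "emeasure (M' \<Otimes>\<^sub>M M') Dg = (\<integral>\<^sup>+x. emeasure M' (Pair x -` Dg) \<partial>M')"
      by (rule M'.emeasure_pair_measure_alt[OF Dg_sets])
    also have "\<dots> = (\<integral>\<^sup>+x. 0 \<partial>M')"
    proof (intro nn_integral_cong)
      fix x assume x: "x \<in> space M'"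
      have "Pair x -` Dg = {x}" using x unfolding Dg_def spM' by auto
      moreover have "{x} \<in> sets M" using x spM' sets.sets_into_space Dg_sets sP
        by (metis (no_types) sets_Pair1 Dg_sets \<open>Pair x -` Dg = {x}\<close> sM')
      ultimately have "emeasure M' (Pair x -` Dg) = emeasure M (A \<inter> {x})" using em' by simp
      also have "\<dots> \<le> emeasure M {x}" using \<open>{x} \<in> sets M\<close> by (intro emeasure_mono) auto
      also have "\<dots> = 0" using nonatomic x spM' by auto
      finally show "emeasure M' (Pair x -` Dg) = 0" by simp
    qed
    finally show ?thesis by simp
  qed
  have "(\<lambda>n. emeasure (M' \<Otimes>\<^sub>M M') (T n)) \<longlonglongrightarrow> emeasure (M' \<Otimes>\<^sub>M M') (\<Inter>n. T n)"
    using T_sets decT by (intro Lim_emeasure_decseq) (auto simp: emT fincl0 finB power_eq_top_ennreal)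
  moreover have "emeasure (M' \<Otimes>\<^sub>M M') (\<Inter>n. T n) = 0"
    using emeasure_mono[OF InT Dg_sets] Dg0 by simp
  ultimately have lim: "(\<lambda>n. \<Sum>b\<in>B n. emeasure M (cl b) ^ 2) \<longlonglongrightarrow> 0" using emT by simp
  have fincl: "emeasure M (cl b) < \<infinity>" for b
    using emeasure_mono[OF cell_sub[of M D A b], of M] A unfolding cl_def by auto
  have eq: "(\<Sum>b\<in>B n. emeasure M (cl b) ^ 2) = ennreal (\<Sum>b\<in>B n. (enn2real (emeasure M (cl b)))^2)" for n
  proof -
    have "(\<Sum>b\<in>B n. emeasure M (cl b) ^ 2) = (\<Sum>b\<in>B n. ennreal ((enn2real (emeasure M (cl b)))^2))"
      using fincl by (intro sum.cong refl) (simp add: ennreal_power[symmetric] ennreal_enn2real_if less_top[symmetric])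
    also have "\<dots> = ennreal (\<Sum>b\<in>B n. (enn2real (emeasure M (cl b)))^2)"
      by (rule sum_ennreal) simp
    finally show ?thesis .
  qed
  have "(\<lambda>n. ennreal (\<Sum>b\<in>B n. (enn2real (emeasure M (cl b)))^2)) \<longlonglongrightarrow> ennreal 0"
    using lim unfolding eq by simp
  then have "(\<lambda>n. \<Sum>b\<in>B n. (enn2real (emeasure M (cl b)))^2) \<longlonglongrightarrow> 0"
    by (subst (asm) tendsto_ennreal_iff) (auto intro!: always_eventually sum_nonneg)
  then show ?thesis unfolding B_def cl_def .
qed

end

inductive_set mcls :: "'a set \<Rightarrow> 'a set set \<Rightarrow> 'a set set" for \<Omega> F where
  Basic: "a \<in> F \<Longrightarrow> a \<in> mcls \<Omega> F"
| Inc: "(\<And>i. A i \<in> mcls \<Omega> F) \<Longrightarrow> incseq A \<Longrightarrow> (\<Union>i::nat. A i) \<in> mcls \<Omega> F"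
| Dec: "(\<And>i. A i \<in> mcls \<Omega> F) \<Longrightarrow> decseq A \<Longrightarrow> (\<Inter>i::nat. A i) \<in> mcls \<Omega> F"

lemma mcls_sub_L:
  assumes "F \<subseteq> L"
    and inc: "\<And>A. range A \<subseteq> L \<Longrightarrow> incseq A \<Longrightarrow> (\<Union>i::nat. A i) \<in> L"
    and dec: "\<And>A. range A \<subseteq> L \<Longrightarrow> decseq A \<Longrightarrow> (\<Inter>i::nat. A i) \<in> L"
  shows "a \<in> mcls \<Omega> F \<Longrightarrow> a \<in> L"
proof (induction rule: mcls.induct)
  case (Basic a) then show ?case using assms by auto
next
  case (Inc A) then show ?case by (intro inc) auto
next
  case (Dec A) then show ?case by (intro dec) auto
qed

context
  fixes \<Omega> F assumes alg: "algebra \<Omega> F"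
begin

lemma algUn: "a \<in> F \<Longrightarrow> b \<in> F \<Longrightarrow> a \<union> b \<in> F"
proof -
  interpret algebra \<Omega> F by (rule alg)
  show "a \<in> F \<Longrightarrow> b \<in> F \<Longrightarrow> a \<union> b \<in> F" by auto
qed

lemma algE: "{} \<in> F"
proof -
  interpret algebra \<Omega> F by (rule alg)
  show ?thesis by auto
qed

lemma mcls_compl: "a \<in> mcls \<Omega> F \<Longrightarrow> \<Omega> - a \<in> mcls \<Omega> F"
proof (induction rule: mcls.induct)
  case (Basic a) then show ?case using algebra.compl_sets[OF alg] by (auto intro: mcls.Basic)
next
  case (Inc A)
  have "\<Omega> - (\<Union>i. A i) = (\<Inter>i. \<Omega> - A i)" by auto
  moreover have "decseq (\<lambda>i. \<Omega> - A i)" using \<open>incseq A\<close> by (simp add: incseq_def decseq_def) blast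
  moreover have "(\<Inter>i. \<Omega> - A i) \<in> mcls \<Omega> F" using Inc.IH calculation(2) by (rule mcls.Dec)
  ultimately show ?case by simp
next
  case (Dec A)
  have "\<Omega> - (\<Inter>i. A i) = (\<Union>i. \<Omega> - A i)" by auto
  moreover have "incseq (\<lambda>i. \<Omega> - A i)" using \<open>decseq A\<close> by (simp add: incseq_def decseq_def) blast
  moreover have "(\<Union>i. \<Omega> - A i) \<in> mcls \<Omega> F" using Dec.IH calculation(2) by (rule mcls.Inc)
  ultimately show ?case by simp
qed

lemma mcls_Un1: "a \<in> mcls \<Omega> F \<Longrightarrow> b \<in> F \<Longrightarrow> a \<union> b \<in> mcls \<Omega> F"
proof (induction rule: mcls.induct)
  case (Basic a) then show ?case using algUn by (auto intro: mcls.Basic)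
next
  case (Inc A)
  have "(\<Union>i. A i) \<union> b = (\<Union>i. A i \<union> b)" by auto
  moreover have "incseq (\<lambda>i. A i \<union> b)" using \<open>incseq A\<close> by (simp add: incseq_def) blast
  moreover have "(\<Union>i. A i \<union> b) \<in> mcls \<Omega> F" using Inc.IH Inc.prems calculation(2) by (intro mcls.Inc) auto
  ultimately show ?case by simp
next
  case (Dec A)
  have "(\<Inter>i. A i) \<union> b = (\<Inter>i. A i \<union> b)" by auto
  moreover have "decseq (\<lambda>i. A i \<union> b)" using \<open>decseq A\<close> by (simp add: decseq_def) blast
  moreover have "(\<Inter>i. A i \<union> b) \<in> mcls \<Omega> F" using Dec.IH Dec.prems calculation(2) by (intro mcls.Dec) auto
  ultimately show ?case by simp
qed

lemma mcls_Un: "b \<in> mcls \<Omega> F \<Longrightarrow> a \<in> mcls \<Omega> F \<Longrightarrow> a \<union> b \<in> mcls \<Omega> F"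
proof (induction rule: mcls.induct)
  case (Basic b) then show ?case using mcls_Un1 by auto
next
  case (Inc A)
  have "a \<union> (\<Union>i. A i) = (\<Union>i. a \<union> A i)" by auto
  moreover have "incseq (\<lambda>i. a \<union> A i)" using \<open>incseq A\<close> by (simp add: incseq_def) blast
  moreover have "(\<Union>i. a \<union> A i) \<in> mcls \<Omega> F" using Inc.IH Inc.prems calculation(2) by (intro mcls.Inc) auto
  ultimately show ?case by simp
next
  case (Dec A)
  have "a \<union> (\<Inter>i. A i) = (\<Inter>i. a \<union> A i)" by auto
  moreover have "decseq (\<lambda>i. a \<union> A i)" using \<open>decseq A\<close> by (simp add: decseq_def) blast
  moreover have "(\<Inter>i. a \<union> A i) \<in> mcls \<Omega> F" using Dec.IH Dec.prems calculation(2) by (intro mcls.Dec) auto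
  ultimately show ?case by simp
qed

lemma mcls_finUn:
  fixes A :: "nat \<Rightarrow> 'a set"
  assumes "\<And>i. A i \<in> mcls \<Omega> F" shows "(\<Union>i\<le>n. A i) \<in> mcls \<Omega> F"
proof (induction n)
  case 0 then show ?case using assms by simp
next
  case (Suc n)
  have "(\<Union>i\<le>Suc n. A i) = (\<Union>i\<le>n. A i) \<union> A (Suc n)" by (auto simp: atMost_Suc)
  then show ?case using Suc mcls_Un assms by auto
qed

lemma sigma_sets_mcls: "a \<in> sigma_sets \<Omega> F \<Longrightarrow> a \<in> mcls \<Omega> F"
proof (induction rule: sigma_sets.induct)
  case (Basic a) then show ?case by (rule mcls.Basic)
next
  case Empty then show ?case using algE by (rule mcls.Basic)
next
  case (Compl a) then show ?case using mcls_compl by blast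
next
  case (Union A)
  have "(\<Union>i. A i) = (\<Union>n. \<Union>i\<le>n. A i)" by auto
  moreover have "incseq (\<lambda>n. \<Union>i\<le>n. A i)" unfolding incseq_def by (intro allI impI UN_mono) auto
  moreover have "(\<Union>n. \<Union>i\<le>n. A i) \<in> mcls \<Omega> F" using Union mcls_finUn calculation(2) by (intro mcls.Inc) auto
  ultimately show ?case by simp
qed

lemma monotone_class:
  assumes "F \<subseteq> L"
    and inc: "\<And>A. range A \<subseteq> L \<Longrightarrow> incseq A \<Longrightarrow> (\<Union>i::nat. A i) \<in> L"
    and dec: "\<And>A. range A \<subseteq> L \<Longrightarrow> decseq A \<Longrightarrow> (\<Inter>i::nat. A i) \<in> L"
  shows "sigma_sets \<Omega> F \<subseteq> L"
  using sigma_sets_mcls mcls_sub_L[OF assms] by blast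

end

definition pg :: "real \<Rightarrow> enat \<Rightarrow> real" where
  "pg s k = (case k of enat n \<Rightarrow> s ^ n | \<infinity> \<Rightarrow> 0)"

lemma Ncount_mono:
  assumes "A \<subseteq> A'" shows "Ncount A X \<le> Ncount A' X"
proof (cases "finite (A' \<inter> X)")
  case True
  have sub: "A \<inter> X \<subseteq> A' \<inter> X" using assms by auto
  then have "finite (A \<inter> X)" using True by (rule finite_subset)
  then show ?thesis using True card_mono[OF True sub] unfolding Ncount_def by simp
next
  case False then show ?thesis unfolding Ncount_def by simp
qed

lemma pg_bound: "0 \<le> s \<Longrightarrow> s \<le> 1 \<Longrightarrow> 0 \<le> pg s k \<and> pg s k \<le> 1"
  unfolding pg_def by (cases k) (auto simp: power_le_one)

lemma pg_antimono: "0 \<le> s \<Longrightarrow> s \<le> 1 \<Longrightarrow> k \<le> k' \<Longrightarrow> pg s k' \<le> pg s k"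
  unfolding pg_def by (cases k; cases k') (auto simp: power_decreasing)

context crq begin

lemma hits_meas:
  assumes S: "space S = cr_sets M" and V: "\<And>b. Vd M (cell M D A b) \<in> sets S"
  shows "hits M D A n \<in> measurable S (count_space UNIV)"
proof -
  define B where "B = {bs::bool list. length bs = n}"
  have finB: "finite B" unfolding B_def by (rule finite_len)
  have eq: "real (hits M D A n X) = (\<Sum>b\<in>B. indicator (space S - Vd M (cell M D A b)) X)"
    if X: "X \<in> space S" for X
  proof -
    have "hits M D A n X = card {b\<in>B. X \<in> space S - Vd M (cell M D A b)}"
      unfolding hits_def hitset_def B_def Vd_def using X S by (intro arg_cong[where f=card]) auto
    also have "{b\<in>B. X \<in> space S - Vd M (cell M D A b)} = B \<inter> {b. X \<in> space S - Vd M (cell M D A b)}" by auto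
    also have "real (card \<dots>) = (\<Sum>b\<in>B. indicator (space S - Vd M (cell M D A b)) X)"
      using finB by (simp add: indicator_def sum.If_cases)
    finally show ?thesis .
  qed
  have rm: "(\<lambda>X. real (hits M D A n X)) \<in> borel_measurable S"
    by (rule measurable_cong[OF eq, THEN iffD2]) (use V in auto)
  show ?thesis unfolding measurable_count_space_eq2_countable
  proof (intro conjI ballI)
    fix k :: nat
    have "hits M D A n -` {k} \<inter> space S = {X \<in> space S. real (hits M D A n X) = real k}" by auto
    also have "\<dots> \<in> sets S" using rm by measurable
    finally show "hits M D A n -` {k} \<inter> space S \<in> sets S" .
  qed auto
qed

lemma N_meas_gen:
  assumes S: "space S = cr_sets M" and V: "\<And>b. Vd M (cell M D A b) \<in> sets S" and A: "A \<subseteq> space M"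
  shows "Ncount A \<in> measurable S (count_space UNIV)"
  unfolding measurable_count_space_eq2_countable
proof (intro conjI ballI)
  note hm = hits_meas[OF S V]
  have hle: "{X \<in> space S. hits M D A n X \<le> k} \<in> sets S" for n k
  proof -
    have "{X \<in> space S. hits M D A n X \<le> k} = hits M D A n -` {..k} \<inter> space S" by auto
    also have "\<dots> \<in> sets S" using measurable_sets[OF hm, of "{..k}"] by simp
    finally show ?thesis .
  qed
  fix k :: enat
  show "Ncount A -` {k} \<inter> space S \<in> sets S"
  proof (cases k)
    case (enat j)
    have hge: "{X \<in> space S. j \<le> hits M D A n X} \<in> sets S" for n
    proof -
      have "{X \<in> space S. j \<le> hits M D A n X} = hits M D A n -` {j..} \<inter> space S" by auto
      also have "\<dots> \<in> sets S" using measurable_sets[OF hm, of "{j..}"] by simp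
      finally show ?thesis .
    qed
    have "Ncount A -` {k} \<inter> space S = (\<Inter>n. {X \<in> space S. hits M D A n X \<le> j}) \<inter> (\<Union>n. {X \<in> space S. j \<le> hits M D A n X})"
    proof (intro equalityI subsetI)
      fix X assume X: "X \<in> Ncount A -` {k} \<inter> space S"
      then have N: "Ncount A X = enat j" using enat by auto
      have "hits M D A n X \<le> j" for n using hits_Ncount_le[of M D A n X] N by simp
      moreover obtain n where "j \<le> hits M D A n X" using hits_Ncount_reach[OF sep A, of j X] N by auto
      ultimately show "X \<in> (\<Inter>n. {X \<in> space S. hits M D A n X \<le> j}) \<inter> (\<Union>n. {X \<in> space S. j \<le> hits M D A n X})"
        using X by auto
    next
      fix X assume X: "X \<in> (\<Inter>n. {X \<in> space S. hits M D A n X \<le> j}) \<inter> (\<Union>n. {X \<in> space S. j \<le> hits M D A n X})"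
      then obtain n0 where n0: "j \<le> hits M D A n0 X" by auto
      have le: "\<And>n. hits M D A n X \<le> j" using X by auto
      have "Ncount A X \<le> enat j"
      proof (rule ccontr)
        assume "\<not> Ncount A X \<le> enat j"
        then have "enat (Suc j) \<le> Ncount A X" by (cases "Ncount A X") auto
        then obtain n where "Suc j \<le> hits M D A n X" using hits_Ncount_reach[OF sep A] by blast
        then show False using le[of n] by auto
      qed
      moreover have "enat j \<le> Ncount A X"
        using hits_Ncount_le[of M D A n0 X] n0 by (auto intro: order_trans[rotated])
      ultimately show "X \<in> Ncount A -` {k} \<inter> space S" using X enat by auto
    qed
    also have "\<dots> \<in> sets S" using hle hge by auto
    finally show ?thesis .
  next
    case infinity
    have "Ncount A -` {k} \<inter> space S = (\<Inter>j. \<Union>n. space S - {X \<in> space S. hits M D A n X \<le> j})"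
    proof (intro equalityI subsetI)
      fix X assume X: "X \<in> Ncount A -` {k} \<inter> space S"
      then have N: "Ncount A X = \<infinity>" using infinity by auto
      show "X \<in> (\<Inter>j. \<Union>n. space S - {X \<in> space S. hits M D A n X \<le> j})"
      proof
        fix j
        obtain n where "Suc j \<le> hits M D A n X" using hits_Ncount_reach[OF sep A, of "Suc j" X] N by auto
        then show "X \<in> (\<Union>n. space S - {X \<in> space S. hits M D A n X \<le> j})" using X by (intro UN_I[of n]) auto
      qed
    next
      fix X assume X: "X \<in> (\<Inter>j. \<Union>n. space S - {X \<in> space S. hits M D A n X \<le> j})"
      have "Ncount A X = \<infinity>"
      proof (rule ccontr)
        assume "Ncount A X \<noteq> \<infinity>"
        then obtain j where j: "Ncount A X = enat j" by (cases "Ncount A X") auto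
        from X obtain n where "\<not> hits M D A n X \<le> j" by blast
        then show False using hits_Ncount_le[of M D A n X] j by simp
      qed
      moreover have "X \<in> space S" using X by auto
      ultimately show "X \<in> Ncount A -` {k} \<inter> space S" using infinity by auto
    qed
    also have "\<dots> \<in> sets S" using hle by auto
    finally show ?thesis .
  qed
qed auto

lemma pg_N_meas: "A \<in> sets M \<Longrightarrow> (\<lambda>X. pg s (Ncount A X)) \<in> borel_measurable Q"
  using measurable_compose[OF N_meas, of A "pg s" borel] by auto

lemma hits_lim:
  assumes A: "A \<subseteq> space M" and s: "0 \<le> s" "s < 1"
  shows "(\<lambda>n. s ^ hits M D A n X) \<longlonglongrightarrow> pg s (Ncount A X)"
proof (cases "Ncount A X")
  case (enat k)
  obtain n0 where n0: "k \<le> hits M D A n0 X" using hits_Ncount_reach[OF sep A, of k X] enat by auto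
  have "eventually (\<lambda>n. s ^ hits M D A n X = s ^ k) sequentially"
  proof (rule eventually_sequentiallyI[of n0])
    fix n assume "n0 \<le> n"
    have "k \<le> hits M D A n X" using n0 hits_mono[OF A \<open>n0 \<le> n\<close>] by (rule order_trans)
    moreover have "hits M D A n X \<le> k" using hits_Ncount_le[of M D A n X] enat by simp
    ultimately show "s ^ hits M D A n X = s ^ k" by simp
  qed
  then show ?thesis unfolding pg_def enat by (simp add: tendsto_eventually)
next
  case infinity
  have "filterlim (\<lambda>n. hits M D A n X) at_top sequentially"
    unfolding filterlim_at_top
  proof
    fix k
    obtain n0 where n0: "k \<le> hits M D A n0 X" using hits_Ncount_reach[OF sep A, of k X] infinity by auto
    show "eventually (\<lambda>n. k \<le> hits M D A n X) sequentially"
    proof (rule eventually_sequentiallyI[of n0])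
      fix n assume "n0 \<le> n"
      show "k \<le> hits M D A n X" using n0 hits_mono[OF A \<open>n0 \<le> n\<close>] by (rule order_trans)
    qed
  qed
  moreover have pw: "(\<lambda>n. s ^ n) \<longlonglongrightarrow> 0" using s by (intro LIMSEQ_power_zero) auto
  ultimately have "(\<lambda>n. s ^ hits M D A n X) \<longlonglongrightarrow> 0"
    using filterlim_compose[OF pw] by blast
  then show ?thesis unfolding pg_def infinity by simp
qed

lemma pgf_N:
  assumes K: "ring_of_sets (space M) K" "K \<subseteq> sets M" "range D \<subseteq> K"
    and VF: "\<And>C. C \<in> K \<Longrightarrow> prob (Vd M C) = exp_neg (emeasure M C)"
    and A: "A \<in> K" "emeasure M A < \<infinity>" and s: "0 \<le> s" "s < 1"
  shows "expectation (\<lambda>X. pg s (Ncount A X)) = exp (- (1 - s) * enn2real (emeasure M A))"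
proof -
  have AM: "A \<in> sets M" using A K by auto
  have Asp: "A \<subseteq> space M" using AM sets.sets_into_space by auto
  define m where "m n b = enn2real (emeasure M (cell M D A b))" for n :: nat and b
  define B where "B n = {bs::bool list. length bs = n}" for n
  have V: "Vd M (cell M D A b) \<in> sets Q" for b using Vd_ev[OF cell_sets[OF AM]] by simp
  have hm: "(\<lambda>X. s ^ hits M D A n X) \<in> borel_measurable Q" for n
    using measurable_compose[OF hits_meas[OF spQ V], of "\<lambda>h. s ^ h" borel] by auto
  have lim1: "(\<lambda>n. expectation (\<lambda>X. s ^ hits M D A n X)) \<longlonglongrightarrow> expectation (\<lambda>X. pg s (Ncount A X))"
  proof (rule integral_dominated_convergence[where w="\<lambda>_. 1"])
    show "(\<lambda>X. pg s (Ncount A X)) \<in> borel_measurable Q" using pg_N_meas[OF AM] .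
    show "AE X in Q. (\<lambda>n. s ^ hits M D A n X) \<longlonglongrightarrow> pg s (Ncount A X)"
      using hits_lim[OF Asp s] by auto
    show "AE X in Q. norm (s ^ hits M D A n X) \<le> 1" for n using s by (auto simp: power_le_one)
  qed (use hm in auto)
  have fincl: "emeasure M (cell M D A b) < \<infinity>" for b
    using emeasure_mono[OF cell_sub[of M D A b] AM] A by auto
  have sumc: "(\<Sum>b\<in>B n. m n b) = enn2real (emeasure M A)" for n
  proof -
    have "emeasure M A = emeasure M (\<Union>b\<in>B n. cell M D A b)"
      using cell_cover[OF Asp, of D n] unfolding B_def by simp
    also have "\<dots> = (\<Sum>b\<in>B n. emeasure M (cell M D A b))"
    proof (rule sum_emeasure[symmetric])
      show "disjoint_family_on (cell M D A) (B n)" unfolding disjoint_family_on_def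
      proof (intro ballI impI)
        fix a b assume "a \<in> B n" "b \<in> B n" "a \<noteq> b"
        then show "cell M D A a \<inter> cell M D A b = {}" by (intro cell_disj) (auto simp: B_def)
      qed
    qed (auto simp: B_def cell_sets[OF AM] finite_len)
    finally show ?thesis unfolding m_def using fincl by (simp add: enn2real_sum)
  qed
  have "(\<lambda>n. \<Prod>b\<in>B n. (1 - (1 - s) * (1 - exp (- m n b)))) \<longlonglongrightarrow> exp (- (1 - s) * enn2real (emeasure M A))"
    using s by (intro prod_limit[OF _ _ sumc]) (auto simp: B_def m_def finite_len cells_sq[OF AM A(2)])
  moreover have "expectation (\<lambda>X. s ^ hits M D A n X) = (\<Prod>b\<in>B n. (1 - (1 - s) * (1 - exp (- m n b))))" for n
  proof -
    have "expectation (\<lambda>X. s ^ hits M D A n X) = (\<Prod>b\<in>{bs. length bs = n}. (s + (1 - s) * exp (- enn2real (emeasure M (cell M D A b)))))"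
      by (rule pgf_hits[OF K VF A(1) A(2) s(1) less_imp_le[OF s(2)]])
    also have "\<dots> = (\<Prod>b\<in>B n. (1 - (1 - s) * (1 - exp (- m n b))))"
      unfolding B_def m_def by (intro prod.cong refl) (simp add: algebra_simps)
    finally show ?thesis .
  qed
  ultimately show ?thesis using lim1 LIMSEQ_unique by simp
qed

lemma N_fin:
  assumes K: "ring_of_sets (space M) K" "K \<subseteq> sets M" "range D \<subseteq> K"
    and VF: "\<And>C. C \<in> K \<Longrightarrow> prob (Vd M C) = exp_neg (emeasure M C)"
    and A: "A \<in> K" "emeasure M A < \<infinity>"
  shows "prob {X \<in> space Q. Ncount A X = \<infinity>} = 0"
proof -
  have AM: "A \<in> sets M" using A K by auto
  define E where "E = {X \<in> space Q. Ncount A X = \<infinity>}"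
  have E: "E \<in> events" unfolding E_def using measurable_sets[OF N_meas[OF AM], of "{\<infinity>}"] by (simp add: vimage_def Int_def conj_commute)
  define c where "c = enn2real (emeasure M A)"
  define s where "s k = 1 - inverse (real (Suc k))" for k
  have s: "0 \<le> s k" "s k < 1" for k unfolding s_def by (auto simp: field_simps)
  have pgb: "0 \<le> pg (s k) j \<and> pg (s k) j \<le> 1" for k j using pg_bound[of "s k" j] s[of k] by auto
  have le: "exp (- (1 - s k) * c) \<le> 1 - prob E" for k
  proof -
    have "exp (- (1 - s k) * c) = expectation (\<lambda>X. pg (s k) (Ncount A X))"
      unfolding c_def using pgf_N[OF K VF A s] by simp
    also have "\<dots> \<le> expectation (indicator (space Q - E))"
    proof (rule integral_mono)
      show "integrable Q (\<lambda>X. pg (s k) (Ncount A X))"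
        using pg_N_meas[OF AM] pgb by (intro integrable_const_bound[where B=1]) auto
      show "integrable Q (indicator (space Q - E) :: _ \<Rightarrow> real)" using E by (intro integrable_real_indicator) (auto simp: less_top[symmetric])
      fix X assume "X \<in> space Q"
      then show "pg (s k) (Ncount A X) \<le> indicator (space Q - E) X"
        using pgb[of k "Ncount A X"] unfolding E_def by (auto simp: indicator_def pg_def)
    qed
    also have "\<dots> = 1 - prob E" using E by (simp add: prob_compl)
    finally show ?thesis .
  qed
  have "(\<lambda>k. 1 - s k) \<longlonglongrightarrow> 0" unfolding s_def using LIMSEQ_inverse_real_of_nat by simp
  then have "(\<lambda>k. exp (- (1 - s k) * c)) \<longlonglongrightarrow> exp (- 0 * c)"
    by (intro tendsto_intros)
  then have "exp (- 0 * c) \<le> 1 - prob E" using le by (intro LIMSEQ_le_const2) auto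
  then show ?thesis using E unfolding E_def by (simp add: measure_nonneg antisym)
qed

end

lemma exp_neg_tendsto:
  assumes x: "x \<longlonglongrightarrow> L" and fin: "\<And>n. x n \<noteq> \<infinity>"
  shows "(\<lambda>n. exp_neg (x n)) \<longlonglongrightarrow> exp_neg L"
proof (cases "L = \<infinity>")
  case True
  have "filterlim (\<lambda>n. enn2real (x n)) at_top sequentially"
    unfolding filterlim_at_top
  proof
    fix Z :: real
    have "eventually (\<lambda>n. ennreal Z < x n) sequentially"
      using x True by (intro order_tendstoD(1)) auto
    then show "eventually (\<lambda>n. Z \<le> enn2real (x n)) sequentially"
    proof (rule eventually_mono)
      fix n assume "ennreal Z < x n"
      then have "enn2real (ennreal Z) \<le> enn2real (x n)"
        using fin[of n] by (intro enn2real_mono) (auto simp: less_top)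
      then show "Z \<le> enn2real (x n)"
      proof (cases "Z \<ge> 0")
        case False
        have "0 \<le> enn2real (x n)" by simp
        then show ?thesis using False by linarith
      qed simp
    qed
  qed
  then have "filterlim (\<lambda>n. - enn2real (x n)) at_bot sequentially"
    by (rule filterlim_compose[OF filterlim_uminus_at_bot_at_top])
  then have "(\<lambda>n. exp (- enn2real (x n))) \<longlonglongrightarrow> 0"
    by (rule filterlim_compose[OF exp_at_bot])
  then show ?thesis using True fin by (simp add: exp_neg_def)
next
  case False
  have "x \<longlonglongrightarrow> ennreal (enn2real L)" using x False by (simp add: ennreal_enn2real_if)
  then have "(\<lambda>n. enn2real (x n)) \<longlonglongrightarrow> enn2real L"
    by (rule tendsto_enn2real) simp
  then have "(\<lambda>n. exp (- enn2real (x n))) \<longlonglongrightarrow> exp (- enn2real L)" by (rule tendsto_exp[OF tendsto_minus])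
  then show ?thesis using False fin by (simp add: exp_neg_def)
qed

context crq begin

lemma Vd_UN: "Vd M (\<Union>i. A i) = (\<Inter>i. Vd M (A i))"
  unfolding Vd_def by auto

lemma VF_inc:
  assumes A: "range A \<subseteq> sets M" "incseq A" and fin: "\<And>n. emeasure M (A n) \<noteq> \<infinity>"
    and VF: "\<And>n. prob (Vd M (A n)) = exp_neg (emeasure M (A n))"
  shows "prob (Vd M (\<Union>i. A i)) = exp_neg (emeasure M (\<Union>i. A i))"
proof -
  have "decseq (\<lambda>i. Vd M (A i))" using A(2) unfolding Vd_def by (auto simp: incseq_def decseq_def)
  then have "(\<lambda>n. prob (Vd M (A n))) \<longlonglongrightarrow> prob (\<Inter>i. Vd M (A i))"
    using A(1) by (intro finite_Lim_measure_decseq) (auto intro: Vd_ev)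
  moreover have "(\<lambda>n. exp_neg (emeasure M (A n))) \<longlonglongrightarrow> exp_neg (emeasure M (\<Union>i. A i))"
    using A fin by (intro exp_neg_tendsto Lim_emeasure_incseq)
  ultimately show ?thesis using VF Vd_UN[of A] LIMSEQ_unique by simp
qed

context
  fixes R assumes ring: "ring_of_sets (space M) R" and gen: "sigma_sets (space M) R = sets M"
    and DR: "range D \<subseteq> R"
    and VFR: "\<And>C. C \<in> R \<Longrightarrow> prob (Vd M C) = exp_neg (emeasure M C)"
begin

lemma RM: "R \<subseteq> sets M" using gen by (auto intro: sigma_sets.Basic)

lemma VF_sub:
  assumes R0: "R0 \<in> R" "emeasure M R0 < \<infinity>" and A: "A \<in> sets M" "A \<subseteq> R0"
  shows "prob (Vd M A) = exp_neg (emeasure M A)"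
proof -
  interpret R: ring_of_sets "space M" R by (rule ring)
  define F where "F = {C \<in> R. C \<subseteq> R0}"
  define L where "L = {A \<in> sets M. A \<subseteq> R0 \<and> prob (Vd M A) = exp_neg (emeasure M A)}"
  have R0sp: "R0 \<subseteq> space M" using R0 R.sets_into_space by auto
  have alg: "algebra R0 F"
    unfolding algebra_iff_Un F_def using R0 by auto
  have FL: "F \<subseteq> L" unfolding F_def L_def using RM VFR by auto
  have finL: "emeasure M B \<noteq> \<infinity>" if "B \<in> L" for B
    using that emeasure_mono[of B R0 M] RM R0 unfolding L_def by (auto simp: top_unique)
  have Nul: "prob {X \<in> space Q. Ncount R0 X = \<infinity>} = 0"
    by (rule N_fin[OF ring RM DR VFR R0])
  have "sigma_sets R0 F \<subseteq> L"
  proof (rule monotone_class[OF alg FL])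
    fix A :: "nat \<Rightarrow> 'a set" assume A: "range A \<subseteq> L" "incseq A"
    have AL: "A n \<in> L" for n using A(1) by auto
    have "prob (Vd M (\<Union>i. A i)) = exp_neg (emeasure M (\<Union>i. A i))"
    proof (rule VF_inc)
      show "range A \<subseteq> sets M" using AL unfolding L_def by auto
      show "emeasure M (A n) \<noteq> \<infinity>" for n using finL[OF AL[of n]] .
      show "prob (Vd M (A n)) = exp_neg (emeasure M (A n))" for n using AL[of n] unfolding L_def by auto
    qed (rule A(2))
    then show "(\<Union>i. A i) \<in> L" using A unfolding L_def by auto
  next
    fix A :: "nat \<Rightarrow> 'a set" assume A: "range A \<subseteq> L" "decseq A"
    have AM: "range A \<subseteq> sets M" using A unfolding L_def by auto
    define I where "I = (\<Inter>i. A i)"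
    have IM: "I \<in> sets M" unfolding I_def using AM by auto
    have IR0: "I \<subseteq> R0" unfolding I_def using A unfolding L_def by auto
    define E where "E = {X \<in> space Q. Ncount R0 X = \<infinity>}"
    have R0M: "R0 \<in> sets M" using R0(1) RM by blast
    have E: "E \<in> events" unfolding E_def
      using measurable_sets[OF N_meas[OF R0M], of "{\<infinity>}"] by (simp add: vimage_def Int_def conj_commute)
    have incV: "incseq (\<lambda>i. Vd M (A i))" using A(2) unfolding Vd_def by (auto simp: incseq_def decseq_def)
    have Vev: "range (\<lambda>i. Vd M (A i)) \<subseteq> events" using AM by (auto intro: Vd_ev)
    have sub1: "(\<Union>i. Vd M (A i)) \<subseteq> Vd M I" unfolding Vd_def I_def by auto
    have sub2: "Vd M I \<subseteq> (\<Union>i. Vd M (A i)) \<union> E"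
    proof
      fix X assume X: "X \<in> Vd M I"
      show "X \<in> (\<Union>i. Vd M (A i)) \<union> E"
      proof (cases "Ncount R0 X = \<infinity>")
        case True then show ?thesis using X spQ unfolding E_def Vd_def by auto
      next
        case False
        then have fin: "finite (X \<inter> A 0)" using A(1) unfolding Ncount_def L_def
          by (auto split: if_splits intro: finite_subset[of "X \<inter> A 0" "R0 \<inter> X"])
        have "\<forall>x\<in>X \<inter> A 0. \<exists>i. x \<notin> A i" using X unfolding Vd_def I_def by auto
        then obtain idx where idx: "\<And>x. x \<in> X \<inter> A 0 \<Longrightarrow> x \<notin> A (idx x)" by metis
        define N where "N = Max (insert 0 (idx ` (X \<inter> A 0)))"
        have "X \<inter> A N = {}"
        proof (rule ccontr)
          assume "X \<inter> A N \<noteq> {}"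
          then obtain x where x: "x \<in> X" "x \<in> A N" by auto
          then have x0: "x \<in> A 0" using A(2) by (auto simp: decseq_def)
          have "idx x \<le> N" unfolding N_def using fin x x0 by (intro Max_ge) auto
          then have "A N \<subseteq> A (idx x)" using A(2) by (auto simp: decseq_def)
          then show False using idx[of x] x x0 by auto
        qed
        then show ?thesis using X unfolding Vd_def by auto
      qed
    qed
    have eq: "prob (Vd M I) = prob (\<Union>i. Vd M (A i))"
    proof (rule antisym)
      have "prob (Vd M I) \<le> prob ((\<Union>i. Vd M (A i)) \<union> E)"
        using sub2 Vev E by (intro finite_measure_mono) auto
      also have "\<dots> \<le> prob (\<Union>i. Vd M (A i)) + prob E"
        using Vev E by (intro measure_subadditive) auto
      finally show "prob (Vd M I) \<le> prob (\<Union>i. Vd M (A i))" using Nul unfolding E_def by simp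
      show "prob (\<Union>i. Vd M (A i)) \<le> prob (Vd M I)"
        using sub1 IM by (intro finite_measure_mono Vd_ev) auto
    qed
    have "(\<lambda>n. prob (Vd M (A n))) \<longlonglongrightarrow> prob (\<Union>i. Vd M (A i))"
      using Vev incV by (intro finite_Lim_measure_incseq) auto
    moreover have "(\<lambda>n. exp_neg (emeasure M (A n))) \<longlonglongrightarrow> exp_neg (emeasure M I)"
      unfolding I_def using AM A finL by (intro exp_neg_tendsto Lim_emeasure_decseq) auto
    moreover have "prob (Vd M (A n)) = exp_neg (emeasure M (A n))" for n using A unfolding L_def by auto
    ultimately have "prob (Vd M I) = exp_neg (emeasure M I)" using eq LIMSEQ_unique by simp
    then show "(\<Inter>i. A i) \<in> L" using IM IR0 unfolding L_def I_def by auto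
  qed
  moreover have "A \<in> sigma_sets R0 F"
  proof -
    have "R0 \<in> sigma_sets (space M) R" using R0 by auto
    from sigma_sets_Int[OF this R0sp] have eq: "(\<inter>) R0 ` sigma_sets (space M) R = sigma_sets R0 ((\<inter>) R0 ` R)" .
    have "(\<inter>) R0 ` R = F" unfolding F_def using R0 by (auto intro!: image_eqI[where x=C for C])
    moreover have "A \<in> (\<inter>) R0 ` sigma_sets (space M) R" using A gen by auto
    ultimately show ?thesis using eq by simp
  qed
  ultimately show ?thesis unfolding L_def by auto
qed

lemma VF_all:
  assumes sfin: "\<exists>Rn :: nat \<Rightarrow> 'a set. range Rn \<subseteq> R \<and> (\<Union>n. Rn n) = space M \<and> (\<forall>n. emeasure M (Rn n) < \<infinity>)"
    and A: "A \<in> sets M"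
  shows "prob (Vd M A) = exp_neg (emeasure M A)"
proof -
  interpret R: ring_of_sets "space M" R by (rule ring)
  from sfin obtain Rn :: "nat \<Rightarrow> 'a set" where Rn0: "range Rn \<subseteq> R \<and> (\<Union>n. Rn n) = space M \<and> (\<forall>n. emeasure M (Rn n) < \<infinity>)" ..
  then have Rn: "range Rn \<subseteq> R" "(\<Union>n. Rn n) = space M" "\<And>n. emeasure M (Rn n) < \<infinity>" by auto
  define Rc where "Rc n = (\<Union>i\<le>n. Rn i)" for n
  have RcR: "Rc n \<in> R" for n unfolding Rc_def using Rn(1) by auto
  have Rcfin: "emeasure M (Rc n) < \<infinity>" for n
  proof -
    have "emeasure M (Rc n) \<le> (\<Sum>i\<le>n. emeasure M (Rn i))"
      unfolding Rc_def using Rn(1) RM by (intro emeasure_subadditive_finite) auto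
    also have "\<dots> < \<infinity>" using Rn(3) by (simp add: sum_Pinfty less_top)
    finally show ?thesis .
  qed
  define An where "An n = A \<inter> Rc n" for n
  have AnM: "An n \<in> sets M" for n unfolding An_def using A RcR RM by auto
  have "prob (Vd M (\<Union>n. An n)) = exp_neg (emeasure M (\<Union>n. An n))"
  proof (rule VF_inc)
    show "range An \<subseteq> sets M" using AnM by auto
    show "incseq An" unfolding An_def Rc_def incseq_def by (intro allI impI Int_mono order_refl UN_mono) auto
    show "emeasure M (An n) \<noteq> \<infinity>" for n
    proof -
      have "Rc n \<in> sets M" using RcR[of n] RM by blast
      then have "emeasure M (An n) \<le> emeasure M (Rc n)" unfolding An_def by (intro emeasure_mono) auto
      then show ?thesis using Rcfin[of n] by (auto simp: top_unique)
    qed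
    show "prob (Vd M (An n)) = exp_neg (emeasure M (An n))" for n
      using VF_sub[OF RcR Rcfin AnM] unfolding An_def by auto
  qed
  moreover have "(\<Union>n. An n) = A"
  proof (intro equalityI subsetI)
    fix x assume x: "x \<in> A"
    then have "x \<in> space M" using A sets.sets_into_space by auto
    then obtain n where "x \<in> Rn n" using Rn(2) by auto
    then have "x \<in> An n" using x unfolding An_def Rc_def by auto
    then show "x \<in> (\<Union>n. An n)" by auto
  qed (auto simp: An_def)
  ultimately show ?thesis by simp
qed

end
end

lemma powser_unique0:
  fixes a :: "nat \<Rightarrow> real"
  assumes sm: "\<And>s. 0 < s \<Longrightarrow> s < 1 \<Longrightarrow> summable (\<lambda>k. \<bar>a k\<bar> * s^k)"
    and z: "\<And>s. 0 < s \<Longrightarrow> s < 1 \<Longrightarrow> (\<lambda>k. a k * s^k) sums 0"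
  shows "a k = 0"
proof (induction k rule: less_induct)
  case (less k)
  define K where "K = (\<Sum>i. \<bar>a (Suc i + k)\<bar> * (1/2)^i)"
  have smK: "summable (\<lambda>i. \<bar>a (Suc i + k)\<bar> * (1/2::real)^i)"
  proof -
    have "summable (\<lambda>i. \<bar>a (i + Suc k)\<bar> * (1/2::real)^(i + Suc k))"
      using summable_ignore_initial_segment[OF sm[of "1/2"], of "Suc k"] by simp
    then have "summable (\<lambda>i. 2^(Suc k) * (\<bar>a (i + Suc k)\<bar> * (1/2::real)^(i + Suc k)))"
      by (rule summable_mult)
    moreover have eqf: "(\<lambda>i. 2^(Suc k) * (\<bar>a (i + Suc k)\<bar> * (1/2::real)^(i + Suc k))) = (\<lambda>i. \<bar>a (Suc i + k)\<bar> * (1/2)^i)"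
    proof (rule ext)
      fix i
      have h: "(2::real)^(Suc k) * (1/2)^(i + Suc k) = (1/2)^i"
        by (simp add: power_add power_one_over field_simps)
      show "2^(Suc k) * (\<bar>a (i + Suc k)\<bar> * (1/2::real)^(i + Suc k)) = \<bar>a (Suc i + k)\<bar> * (1/2)^i"
        using h by (simp add: mult.left_commute)
    qed
    ultimately show ?thesis by (simp only:)
  qed
  have K0: "0 \<le> K" unfolding K_def using smK by (intro suminf_nonneg) auto
  have bound: "\<bar>a k\<bar> \<le> s * K" if s: "0 < s" "s \<le> 1/2" for s
  proof -
    have s1: "s < 1" using s by simp
    have "(\<lambda>i. a (i + k) * s^(i + k)) sums (0 - (\<Sum>i<k. a i * s^i))"
      by (rule sums_split_initial_segment[OF z[OF s(1) s1]])
    moreover have "(\<Sum>i<k. a i * s^i) = 0" using less by simp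
    ultimately have "(\<lambda>i. a (i + k) * s^(i + k)) sums 0" by simp
    then have "(\<lambda>i. (1 / s^k) * (a (i + k) * s^(i + k))) sums ((1 / s^k) * 0)"
      by (rule sums_mult)
    moreover have "(1 / s^k) * (a (i + k) * s^(i + k)) = a (i + k) * s^i" for i
      using s by (simp add: power_add field_simps)
    ultimately have S: "(\<lambda>i. a (i + k) * s^i) sums 0" by simp
    have "(\<lambda>i. a (i + 1 + k) * s^(i + 1)) sums (0 - (\<Sum>i<1. a (i + k) * s^i))"
      using sums_split_initial_segment[OF S, of 1] by (simp add: add.assoc add.commute)
    then have S2: "(\<lambda>i. a (Suc i + k) * s^(Suc i)) sums (- a k)" by simp
    have bnd: "norm (a (Suc i + k) * s^(Suc i)) \<le> s * (\<bar>a (Suc i + k)\<bar> * (1/2)^i)" for i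
    proof -
      have "s^i \<le> (1/2)^i" using s by (intro power_mono) auto
      then have "\<bar>a (Suc i + k)\<bar> * s^i \<le> \<bar>a (Suc i + k)\<bar> * (1/2)^i" by (intro mult_left_mono) auto
      then show ?thesis using s by (simp add: abs_mult mult_left_mono mult.assoc mult.left_commute)
    qed
    have smb: "summable (\<lambda>i. s * (\<bar>a (Suc i + k)\<bar> * (1/2)^i))" using smK by (rule summable_mult)
    have "\<bar>a k\<bar> = norm (\<Sum>i. a (Suc i + k) * s^(Suc i))" using sums_unique[OF S2] by simp
    also have "\<dots> \<le> (\<Sum>i. s * (\<bar>a (Suc i + k)\<bar> * (1/2)^i))"
      by (rule norm_suminf_le[OF bnd smb])
    also have "\<dots> = s * K" unfolding K_def using smK by (rule suminf_mult)
    finally show ?thesis .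
  qed
  show "a k = 0"
  proof (rule ccontr)
    assume ne: "a k \<noteq> 0"
    define s where "s = min (1/2) (\<bar>a k\<bar> / (2 * (K + 1)))"
    have s1: "s \<le> 1/2" unfolding s_def by (rule min.cobounded1)
    have "0 < \<bar>a k\<bar> / (2 * (K + 1))" using ne K0 by simp
    then have s0: "0 < s" unfolding s_def by simp
    note s = s0 s1
    have "s * K \<le> (\<bar>a k\<bar> / (2 * (K + 1))) * K" unfolding s_def using K0 by (intro mult_right_mono) auto
    also have "\<dots> < \<bar>a k\<bar>" using ne K0 by (simp add: field_simps) (simp add: add_nonneg_pos)
    finally show False using bound[OF s] by simp
  qed
qed


lemma exp_neg_add: "exp_neg (a + b) = exp_neg a * exp_neg b"
  unfolding exp_neg_def by (auto simp: enn2real_plus exp_add[symmetric] less_top)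

lemma exp_neg_0: "exp_neg 0 = 1" unfolding exp_neg_def by simp

lemma exp_neg_sum: "finite J \<Longrightarrow> exp_neg (\<Sum>j\<in>J. x j) = (\<Prod>j\<in>J. exp_neg (x j))"
  by (induction J rule: finite_induct) (simp_all add: exp_neg_add exp_neg_0)

context crq begin

context
  assumes VFM: "\<And>C. C \<in> sets M \<Longrightarrow> prob (Vd M C) = exp_neg (emeasure M C)"
begin

lemma pgf_M:
  assumes A: "A \<in> sets M" "emeasure M A < \<infinity>" and s: "0 \<le> s" "s < 1"
  shows "expectation (\<lambda>X. pg s (Ncount A X)) = exp (- (1 - s) * enn2real (emeasure M A))"
  by (rule pgf_N[OF ring_sets order_refl D VFM A s])

lemma pgf_series:
  assumes A: "A \<in> sets M" and s: "0 \<le> s" "s < 1"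
  shows "(\<lambda>k. prob {X \<in> space Q. Ncount A X = enat k} * s^k) sums expectation (\<lambda>X. pg s (Ncount A X))"
proof -
  define E where "E k = {X \<in> space Q. Ncount A X = enat k}" for k
  have E: "E k \<in> events" for k
    unfolding E_def using measurable_sets[OF N_meas[OF A], of "{enat k}"] by (simp add: vimage_def Int_def conj_commute)
  have disj: "disjoint_family E" unfolding disjoint_family_on_def E_def by auto
  have pw: "ennreal (pg s (Ncount A X)) = (\<Sum>k. ennreal (s^k) * indicator (E k) X)" if X: "X \<in> space Q" for X
  proof (cases "Ncount A X")
    case (enat j)
    then have "X \<in> E j" unfolding E_def using X by auto
    then show ?thesis using suminf_cmult_indicator[OF disj, of X j "\<lambda>k. ennreal (s^k)"] enat by (simp add: pg_def)
  next
    case infinity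
    then have "indicator (E k) X = (0::ennreal)" for k unfolding E_def by auto
    then show ?thesis using infinity by (simp add: pg_def)
  qed
  have int: "integrable Q (\<lambda>X. pg s (Ncount A X))"
    using pg_N_meas[OF A] pg_bound[of s] s by (intro integrable_const_bound[where B=1]) auto
  have nb: "norm (prob (E k) * s^k) \<le> s^k" for k
    using s by (simp add: abs_mult mult_left_le_one_le)
  have smE: "summable (\<lambda>k. prob (E k) * s^k)"
    by (rule summable_comparison_test'[OF summable_geometric, where N=0]) (use s nb in auto)
  have "ennreal (expectation (\<lambda>X. pg s (Ncount A X))) = (\<integral>\<^sup>+X. ennreal (pg s (Ncount A X)) \<partial>Q)"
    using int pg_bound[of s] s by (intro nn_integral_eq_integral[symmetric]) auto
  also have "\<dots> = (\<integral>\<^sup>+X. (\<Sum>k. ennreal (s^k) * indicator (E k) X) \<partial>Q)"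
    by (intro nn_integral_cong pw)
  also have "\<dots> = (\<Sum>k. \<integral>\<^sup>+X. ennreal (s^k) * indicator (E k) X \<partial>Q)"
    using E by (intro nn_integral_suminf) auto
  also have "\<dots> = (\<Sum>k. ennreal (prob (E k) * s^k))"
    using E by (simp add: nn_integral_cmult_indicator emeasure_eq_measure ennreal_mult'' mult.commute)
  also have "\<dots> = ennreal (\<Sum>k. prob (E k) * s^k)"
  proof (rule suminf_ennreal2)
    show "summable (\<lambda>k. prob (E k) * s^k)" by (rule smE)
  qed (use s in auto)
  moreover have "0 \<le> expectation (\<lambda>X. pg s (Ncount A X))"
    using pg_bound[of s] s by (intro integral_nonneg_AE) auto
  moreover have "0 \<le> (\<Sum>k. prob (E k) * s^k)"
    using smE s by (intro suminf_nonneg) auto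
  ultimately have "expectation (\<lambda>X. pg s (Ncount A X)) = (\<Sum>k. prob (E k) * s^k)"
    by (simp add: ennreal_inj)
  with smE show ?thesis unfolding E_def by (simp add: summable_sums)
qed
lemma poisson_fin:
  assumes A: "A \<in> sets M" "emeasure M A < \<infinity>"
  shows "prob {X \<in> space Q. Ncount A X = enat k} = exp (- enn2real (emeasure M A)) * (enn2real (emeasure M A))^k / fact k"
proof -
  define m where "m = enn2real (emeasure M A)"
  define p where "p k = prob {X \<in> space Q. Ncount A X = enat k}" for k
  define q where "q k = exp (- m) * m^k / fact k" for k
  have m0: "0 \<le> m" unfolding m_def by simp
  have ps: "(\<lambda>k. p k * s^k) sums exp (- (1 - s) * m)" if "0 \<le> s" "s < 1" for s
    using pgf_series[OF A(1) that] pgf_M[OF A that] unfolding p_def m_def by simp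
  have qs: "(\<lambda>k. q k * s^k) sums exp (- (1 - s) * m)" for s
  proof -
    have "(\<lambda>k. exp (- m) * ((m * s)^k /\<^sub>R fact k)) sums (exp (- m) * exp (m * s))"
      by (intro sums_mult exp_converges)
    moreover have "exp (- m) * exp (m * s) = exp (- (1 - s) * m)" by (simp add: exp_add[symmetric] algebra_simps)
    moreover have "exp (- m) * ((m * s)^k /\<^sub>R fact k) = q k * s^k" for k
      unfolding q_def by (simp add: power_mult_distrib field_simps)
    ultimately show ?thesis by simp
  qed
  have "p k - q k = 0"
  proof (rule powser_unique0)
    fix s :: real assume s: "0 < s" "s < 1"
    have "(\<lambda>k. p k * s^k - q k * s^k) sums (exp (- (1 - s) * m) - exp (- (1 - s) * m))"
      using ps[of s] qs[of s] s by (intro sums_diff) auto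
    then show "(\<lambda>k. (p k - q k) * s^k) sums 0" by (simp add: left_diff_distrib)
    have smpq: "summable (\<lambda>k. p k * s^k + q k * s^k)"
      using ps[of s] qs[of s] s by (intro summable_add) (auto simp: sums_iff)
    have bpq: "\<bar>p k - q k\<bar> * s^k \<le> p k * s^k + q k * s^k" for k
    proof -
      have "0 \<le> p k" unfolding p_def by simp
      moreover have "0 \<le> q k" unfolding q_def using m0 by simp
      ultimately have "\<bar>p k - q k\<bar> \<le> p k + q k" by simp
      then show ?thesis using s by (simp add: distrib_right[symmetric] mult_right_mono)
    qed
    show "summable (\<lambda>k. \<bar>p k - q k\<bar> * s^k)"
      by (rule summable_comparison_test'[OF smpq, where N=0]) (use bpq s in \<open>auto simp: abs_mult\<close>)
  qed
  then show ?thesis unfolding p_def q_def m_def by simp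
qed

lemma poisson_inf:
  assumes A: "A \<in> sets M" "emeasure M A = \<infinity>"
    and exh: "\<exists>Rn :: nat \<Rightarrow> 'a set. range Rn \<subseteq> sets M \<and> (\<Union>n. Rn n) = space M \<and> (\<forall>n. emeasure M (Rn n) < \<infinity>)"
  shows "prob {X \<in> space Q. Ncount A X = \<infinity>} = 1"
proof -
  from exh obtain Rn :: "nat \<Rightarrow> 'a set" where Rn0: "range Rn \<subseteq> sets M \<and> (\<Union>n. Rn n) = space M \<and> (\<forall>n. emeasure M (Rn n) < \<infinity>)" ..
  then have Rn: "range Rn \<subseteq> sets M" "(\<Union>n. Rn n) = space M" "\<And>n. emeasure M (Rn n) < \<infinity>" by auto
  define An where "An n = A \<inter> (\<Union>i\<le>n. Rn i)" for n
  have AnM: "An n \<in> sets M" for n unfolding An_def using A Rn by auto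
  have Anfin: "emeasure M (An n) < \<infinity>" for n
  proof -
    have "emeasure M (An n) \<le> emeasure M (\<Union>i\<le>n. Rn i)" unfolding An_def using Rn by (intro emeasure_mono) auto
    also have "\<dots> \<le> (\<Sum>i\<le>n. emeasure M (Rn i))" using Rn by (intro emeasure_subadditive_finite) auto
    also have "\<dots> < \<infinity>" using Rn(3) by (simp add: less_top)
    finally show ?thesis .
  qed
  have incA: "incseq An" unfolding An_def incseq_def by (intro allI impI Int_mono order_refl UN_mono) auto
  have UA: "(\<Union>n. An n) = A"
  proof (intro equalityI subsetI)
    fix x assume x: "x \<in> A"
    then have "x \<in> space M" using A sets.sets_into_space by auto
    then obtain n where "x \<in> Rn n" using Rn(2) by auto
    then show "x \<in> (\<Union>n. An n)" using x unfolding An_def by auto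
  qed (auto simp: An_def)
  define f where "f X = pg (1/2) (Ncount A X)" for X
  have fm: "f \<in> borel_measurable Q" unfolding f_def by (rule pg_N_meas[OF A(1)])
  have fb: "0 \<le> f X \<and> f X \<le> 1" for X unfolding f_def by (rule pg_bound) auto
  have fint: "integrable Q f" using fm fb by (intro integrable_const_bound[where B=1]) auto
  have le: "expectation f \<le> exp (- (1/2) * enn2real (emeasure M (An n)))" for n
  proof -
    have "expectation f \<le> expectation (\<lambda>X. pg (1/2) (Ncount (An n) X))"
    proof (rule integral_mono[OF fint])
      show "integrable Q (\<lambda>X. pg (1/2) (Ncount (An n) X))"
        using pg_N_meas[OF AnM] pg_bound[of "1/2"] by (intro integrable_const_bound[where B=1]) auto
      show "f X \<le> pg (1/2) (Ncount (An n) X)" for X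
        unfolding f_def by (rule pg_antimono) (auto intro: Ncount_mono simp: An_def)
    qed
    also have "\<dots> = exp (- (1/2) * enn2real (emeasure M (An n)))"
      using pgf_M[OF AnM Anfin, of "1/2"] by simp
    finally show ?thesis .
  qed
  have "(\<lambda>n. exp_neg (emeasure M (An n))) \<longlonglongrightarrow> exp_neg (emeasure M (\<Union>n. An n))"
    using AnM incA Anfin by (intro exp_neg_tendsto Lim_emeasure_incseq) (auto simp: less_top)
  then have "(\<lambda>n. exp (- enn2real (emeasure M (An n)))) \<longlonglongrightarrow> 0"
    using Anfin A(2) UA by (simp add: exp_neg_def less_top[symmetric])
  then have "(\<lambda>n. sqrt (exp (- enn2real (emeasure M (An n))))) \<longlonglongrightarrow> sqrt 0"
    by (intro tendsto_intros)
  moreover have "sqrt (exp (- enn2real (emeasure M (An n)))) = exp (- (1/2) * enn2real (emeasure M (An n)))" for n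
  proof -
    have "exp (- (1/2) * enn2real (emeasure M (An n)))^2 = exp (- enn2real (emeasure M (An n)))"
      by (simp add: power2_eq_square exp_add[symmetric])
    then show ?thesis by (metis exp_ge_zero real_sqrt_abs abs_of_nonneg)
  qed
  ultimately have "(\<lambda>n. exp (- (1/2) * enn2real (emeasure M (An n)))) \<longlonglongrightarrow> 0" by simp
  then have "expectation f \<le> 0" using le by (intro LIMSEQ_le_const) auto
  moreover have "0 \<le> expectation f" using fb by (intro integral_nonneg_AE) auto
  ultimately have "expectation f = 0" by simp
  then have "AE X in Q. f X = 0" using integral_nonneg_eq_0_iff_AE[OF fint] fb by auto
  then have "AE X in Q. Ncount A X = \<infinity>"
    by (rule eventually_mono) (auto simp: f_def pg_def split: enat.splits)
  moreover have "{X \<in> space Q. Ncount A X = \<infinity>} \<in> events"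
    using measurable_sets[OF N_meas[OF A(1)], of "{\<infinity>}"] by (simp add: vimage_def Int_def conj_commute)
  ultimately show ?thesis by (simp add: prob_Collect_eq_1)
qed

lemma indep_N:
  assumes A: "\<forall>i<n. A i \<in> sets M" and disj: "disjoint_family_on A {..<n}"
  shows "indep_vars (\<lambda>_. count_space UNIV) (\<lambda>i X. Ncount (A i) X) {..<n}"
  unfolding indep_vars_def
proof (intro conjI ballI)
  fix i assume "i \<in> {..<n}"
  then show "random_variable (count_space UNIV) (\<lambda>X. Ncount (A i) X)" using A N_meas by auto
next
  define G where "G i = {Vd M C | C. C \<in> sets M \<and> C \<subseteq> A i}" for i
  have Gev: "G i \<subseteq> events" for i unfolding G_def using Vd_ev by auto
  have GPow: "G i \<subseteq> Pow (space Q)" for i using Gev sets.sets_into_space by blast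
  have indG: "indep_sets G {..<n}"
  proof (rule indep_setsI)
    show "G i \<subseteq> events" for i by (rule Gev)
    fix E J assume J: "J \<noteq> {}" "J \<subseteq> {..<n}" "finite J" and E: "\<forall>j\<in>J. E j \<in> G j"
    have ex: "\<forall>j\<in>J. \<exists>C. E j = Vd M C \<and> C \<in> sets M \<and> C \<subseteq> A j" using E unfolding G_def by blast
    from bchoice[OF ex] obtain C where C0: "\<forall>j\<in>J. E j = Vd M (C j) \<and> C j \<in> sets M \<and> C j \<subseteq> A j" ..
    then have C: "\<And>j. j \<in> J \<Longrightarrow> E j = Vd M (C j) \<and> C j \<in> sets M \<and> C j \<subseteq> A j" by blast
    have "(\<Inter>j\<in>J. E j) = Vd M (\<Union>j\<in>J. C j)" using C J(1) unfolding Vd_def by auto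
    then have "prob (\<Inter>j\<in>J. E j) = exp_neg (emeasure M (\<Union>j\<in>J. C j))"
      using C J by (simp add: VFM sets.finite_UN)
    also have "emeasure M (\<Union>j\<in>J. C j) = (\<Sum>j\<in>J. emeasure M (C j))"
    proof (rule sum_emeasure[symmetric])
      show "disjoint_family_on C J" unfolding disjoint_family_on_def
      proof (intro ballI impI)
        fix a b assume ab: "a \<in> J" "b \<in> J" "a \<noteq> b"
        then have "A a \<inter> A b = {}" using disj J(2) unfolding disjoint_family_on_def by auto
        then show "C a \<inter> C b = {}" using C ab by blast
      qed
    qed (use C J in auto)
    also have "exp_neg \<dots> = (\<Prod>j\<in>J. exp_neg (emeasure M (C j)))" by (rule exp_neg_sum[OF J(3)])
    also have "\<dots> = (\<Prod>j\<in>J. prob (E j))" using C by (intro prod.cong refl) (simp add: VFM)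
    finally show "prob (\<Inter>j\<in>J. E j) = (\<Prod>j\<in>J. prob (E j))" .
  qed
  have stable: "Int_stable (G i)" for i
    unfolding Int_stable_def G_def
  proof (intro ballI)
    fix a b assume "a \<in> {Vd M C |C. C \<in> sets M \<and> C \<subseteq> A i}" "b \<in> {Vd M C |C. C \<in> sets M \<and> C \<subseteq> A i}"
    then obtain Ca Cb where "a = Vd M Ca" "Ca \<in> sets M" "Ca \<subseteq> A i" "b = Vd M Cb" "Cb \<in> sets M" "Cb \<subseteq> A i" by auto
    moreover have "Vd M Ca \<inter> Vd M Cb = Vd M (Ca \<union> Cb)" unfolding Vd_def by auto
    ultimately show "a \<inter> b \<in> {Vd M C |C. C \<in> sets M \<and> C \<subseteq> A i}" by auto
  qed
  have indS: "indep_sets (\<lambda>i. sigma_sets (space Q) (G i)) {..<n}"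
    by (rule indep_sets_sigma[OF indG stable])
  show "indep_sets (\<lambda>i. sigma_sets (space Q) {(\<lambda>X. Ncount (A i) X) -` B \<inter> space Q |B. B \<in> sets (count_space UNIV)}) {..<n}"
  proof (rule indep_sets_mono_sets[OF indS])
    fix i assume i: "i \<in> {..<n}"
    define S where "S = sigma (space Q) (G i)"
    have sS: "sets S = sigma_sets (space Q) (G i)" unfolding S_def using GPow by (rule sets_measure_of)
    have spS: "space S = cr_sets M" unfolding S_def using GPow spQ by simp
    have AiM: "A i \<in> sets M" using A i by auto
    have V: "Vd M (cell M D (A i) b) \<in> sets S" for b
      unfolding sS G_def using cell_sets[OF AiM, of b] cell_sub[of M D "A i" b]
      by (intro sigma_sets.Basic) auto
    have Nm: "Ncount (A i) \<in> measurable S (count_space UNIV)"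
      by (rule N_meas_gen[OF spS V]) (use AiM sets.sets_into_space in auto)
    have "{(\<lambda>X. Ncount (A i) X) -` B \<inter> space Q |B. B \<in> sets (count_space UNIV)} \<subseteq> sigma_sets (space Q) (G i)"
      using measurable_sets[OF Nm] unfolding sS spS spQ[symmetric] by auto
    then show "sigma_sets (space Q) {(\<lambda>X. Ncount (A i) X) -` B \<inter> space Q |B. B \<in> sets (count_space UNIV)} \<subseteq> sigma_sets (space Q) (G i)"
      by (rule sigma_sets_mono)
  qed
qed

end
end

theorem corollary1p4:
  fixes M :: "'a measure" and P :: "'w measure" and R :: "'a set set" and \<pi> :: "'w \<Rightarrow> 'a set"
  assumes diag: "{(x, x) | x. x \<in> space M} \<in> sets (M \<Otimes>\<^sub>M M)"
    and ring: "ring_of_sets (space M) R"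
    and gen: "sigma_sets (space M) R = sets M"
    and sfin: "\<exists>Rn :: nat \<Rightarrow> 'a set. range Rn \<subseteq> R \<and> (\<Union>n. Rn n) = space M \<and> (\<forall>n. emeasure M (Rn n) < \<infinity>)"
    and nonatomic: "\<forall>x \<in> space M. emeasure M {x} = 0"
    and P: "prob_space P"
    and cr: "cr_set P M \<pi>"
    and void: "\<forall>A \<in> R. measure P {\<omega> \<in> space P. \<pi> \<omega> \<inter> A = {}} = exp_neg (emeasure M A)"
  shows "poisson_process P M \<pi>"
proof -
  interpret P: prob_space P by (rule P)
  have pim: "\<pi> \<in> measurable P (cr_space M)" using cr unfolding cr_set_def .
  define Q where "Q = distr P (cr_space M) \<pi>"
  have Qp: "prob_space Q" unfolding Q_def by (rule P.prob_space_distr[OF pim])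
  have sQ: "sets Q = sets (cr_space M)" by (simp add: Q_def)
  interpret R: ring_of_sets "space M" R by (rule ring)
  have e: "{} \<in> R" by simp
  obtain D :: "nat \<Rightarrow> 'a set" where D: "range D \<subseteq> R" "\<forall>x\<in>space M. \<forall>y\<in>space M. (\<forall>j. x \<in> D j \<longleftrightarrow> y \<in> D j) \<longrightarrow> x = y"
    using separating_seq[OF diag gen e] by blast
  have RM: "R \<subseteq> sets M" using gen by (auto intro: sigma_sets.Basic)
  have "crq Q M D"
    unfolding crq_def crq_axioms_def using Qp sQ D RM diag nonatomic by auto
  then interpret q: crq Q M D .
  have VFR: "q.prob (Vd M C) = exp_neg (emeasure M C)" if C: "C \<in> R" for C
  proof -
    have CM: "C \<in> sets M" using C RM by auto
    have "q.prob (Vd M C) = measure P (\<pi> -` Vd M C \<inter> space P)"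
      unfolding Q_def by (rule measure_distr[OF pim Vd_sets[OF CM]])
    also have "\<pi> -` Vd M C \<inter> space P = {\<omega> \<in> space P. \<pi> \<omega> \<inter> C = {}}"
      using measurable_space[OF pim] unfolding Vd_def space_cr_space by auto
    finally show ?thesis using void C by simp
  qed
  have VFM: "q.prob (Vd M C) = exp_neg (emeasure M C)" if "C \<in> sets M" for C
    by (rule q.VF_all[OF ring gen D(1) VFR sfin that])
  have exh: "\<exists>Rn :: nat \<Rightarrow> 'a set. range Rn \<subseteq> sets M \<and> (\<Union>n. Rn n) = space M \<and> (\<forall>n. emeasure M (Rn n) < \<infinity>)"
  proof -
    from sfin obtain Rn :: "nat \<Rightarrow> 'a set" where Rn: "range Rn \<subseteq> R \<and> (\<Union>n. Rn n) = space M \<and> (\<forall>n. emeasure M (Rn n) < \<infinity>)" ..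
    then have "range Rn \<subseteq> sets M" using RM by auto
    with Rn show ?thesis by (intro exI[of _ Rn]) simp
  qed
  have lawk: "measure (distr Q (count_space UNIV) (Ncount A)) {k} = q.prob {X \<in> space Q. Ncount A X = k}"
    if A: "A \<in> sets M" for A k
  proof -
    have "measure (distr Q (count_space UNIV) (Ncount A)) {k} = measure Q (Ncount A -` {k} \<inter> space Q)"
      by (rule measure_distr[OF q.N_meas[OF A]]) simp
    also have "Ncount A -` {k} \<inter> space Q = {X \<in> space Q. Ncount A X = k}" by auto
    finally show ?thesis .
  qed
  show ?thesis
    unfolding poisson_process_def Let_def Q_def[symmetric]
  proof (intro conjI allI impI ballI)
    fix n :: nat and A :: "nat \<Rightarrow> 'a set"
    assume "(\<forall>i<n. A i \<in> sets M) \<and> disjoint_family_on A {..<n}"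
    then show "prob_space.indep_vars Q (\<lambda>_. count_space UNIV) (\<lambda>i X. Ncount (A i) X) {..<n}"
      using q.indep_N[OF VFM] by blast
  next
    fix A assume A: "A \<in> sets M"
    show "poisson_law (distr Q (count_space UNIV) (Ncount A)) (emeasure M A)"
      unfolding poisson_law_def
    proof (cases "emeasure M A = \<infinity>")
      case True
      then show "if emeasure M A = \<infinity> then measure (distr Q (count_space UNIV) (Ncount A)) {\<infinity>} = 1
         else \<forall>k. measure (distr Q (count_space UNIV) (Ncount A)) {enat k} =
                  exp (- enn2real (emeasure M A)) * enn2real (emeasure M A) ^ k / fact k"
        using lawk[OF A] q.poisson_inf[OF VFM A True exh] by simp
    next
      case False
      then have fin: "emeasure M A < \<infinity>" by (simp add: less_top)
      show "if emeasure M A = \<infinity> then measure (distr Q (count_space UNIV) (Ncount A)) {\<infinity>} = 1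
         else \<forall>k. measure (distr Q (count_space UNIV) (Ncount A)) {enat k} =
                  exp (- enn2real (emeasure M A)) * enn2real (emeasure M A) ^ k / fact k"
        using lawk[OF A] q.poisson_fin[OF VFM A fin] False by simp
    qed
  qed
qed


end
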